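(* Let $r\ge 3$ and $k\ge 2$ be integers. There exist $r$-sets $(e_i)_{i=0}^{T_1}$, all containing $v_1^r$, and an $r$-graph $H_1$ with vertex set $A_{r-1}^*\cup\{v_1^r\}$ that is $(e_i)_{i=0}^{T_1}$-sequential, where $T_1=(2k-1)^{r-3}(8k^2-12k+6)-2$.
   Context: Fix a positive integer $k$. For every integer $i\ge1$ let $A_i=\{v_1^i,v_2^i,\dots,v_{4k-3}^i\}$ (pairwise disjoint sets) and $A_i^*=\bigcup_{j=1}^iA_j$. An $r$-graph is an $r$-uniform hypergraph identified with its edge set; $F_r=K^r_{r+1}$. For an $r$-graph $G_0$ on vertex set $V$, the $F_r$-bootstrap process in the complete $r$-graph on $V$ is: $G_i=G_{i-1}\cup\{e : e\notin G_{i-1} \text{ an } r\text{-subset of } V,\ \exists\, w\in V\setminus e \text{ with every other } r\text{-subset of } e\cup\{w\} \text{ in } G_{i-1}\}$; the $r$-sets in $G_i\setminus G_{i-1}$ are infected at step $i$; $G_0$ is stationary if $G_1=G_0$. Definition (sequential): Let $r\ge3$, $H$ an $r$-graph with vertex set $V(H)\subseteq A_r^*$, and $(e_i)_{i=0}^T$ a sequence of $r$-subsets of $V(H)$ with $e_0\in H$. Then $H$ is $(e_i)_{i=0}^T$-sequential if, for the $F_r$-bootstrap process in the complete $r$-graph on $V(H)$: (i) starting from $H$, the process runs for $T$ steps (becomes stationary after step $T$), infecting only $e_i$ at step $i$ for each $i\in[1,T]$; (ii) $H\setminus\{e_0\}$ is stationary; (iii) starting from $(H\cup\{e_T\})\setminus\{e_0\}$,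 the process infects only $e_{T-i}$ at step $i$ for each $i\in[1,T]$. *)

theory Defs
  imports Main
begin

text \<open>Vertex v_j^i is represented as the pair (i, j).\<close>

definition vtx :: "nat \<Rightarrow> nat \<Rightarrow> nat \<times> nat" where
  "vtx i j = (i, j)"

definition Aset :: "nat \<Rightarrow> nat \<Rightarrow> (nat \<times> nat) set" where
  "Aset k i = {vtx i j | j. 1 \<le> j \<and> j \<le> 4 * k - 3}"

definition Astar :: "nat \<Rightarrow> nat \<Rightarrow> (nat \<times> nat) set" where
  "Astar k i = (\<Union>j\<in>{1..i}. Aset k j)"

text \<open>One step of the K^r_{r+1}-bootstrap process in the complete r-graph on V.\<close>
definition bstep :: "nat \<Rightarrow> 'a set \<Rightarrow> 'a set set \<Rightarrow> 'a set set" where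
  "bstep r V G = G \<union> {e. e \<subseteq> V \<and> card e = r \<and> e \<notin> G \<and>
      (\<exists>w \<in> V - e. \<forall>f. f \<subseteq> insert w e \<and> card f = r \<and> f \<noteq> e \<longrightarrow> f \<in> G)}"

definition bproc :: "nat \<Rightarrow> 'a set \<Rightarrow> 'a set set \<Rightarrow> nat \<Rightarrow> 'a set set" where
  "bproc r V G i = (bstep r V ^^ i) G"

definition stationary :: "nat \<Rightarrow> 'a set \<Rightarrow> 'a set set \<Rightarrow> bool" where
  "stationary r V G \<longleftrightarrow> bstep r V G = G"

definition r_graph :: "nat \<Rightarrow> 'a set \<Rightarrow> 'a set set \<Rightarrow> bool" where
  "r_graph r V H \<longleftrightarrow> (\<forall>e\<in>H. e \<subseteq> V \<and> card e = r)"

definition sequential ::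
  "nat \<Rightarrow> nat \<Rightarrow> (nat \<times> nat) set \<Rightarrow> (nat \<times> nat) set set \<Rightarrow>
   (nat \<Rightarrow> (nat \<times> nat) set) \<Rightarrow> nat \<Rightarrow> bool" where
  "sequential k r V H e T \<longleftrightarrow>
     r \<ge> 3 \<and> V \<subseteq> Astar k r \<and> r_graph r V H \<and>
     (\<forall>i \<le> T. e i \<subseteq> V \<and> card (e i) = r) \<and> e 0 \<in> H \<and>
     (\<forall>i \<in> {1..T}. bproc r V H i - bproc r V H (i - 1) = {e i}) \<and>
     bproc r V H (Suc T) = bproc r V H T \<and>
     stationary r V (H - {e 0}) \<and>
     (\<forall>i \<in> {1..T}. bproc r V ((H \<union> {e T}) - {e 0}) i
                     - bproc r V ((H \<union> {e T}) - {e 0}) (i - 1) = {e (T - i)})"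

end

theory Submission
  imports Defs
begin


definition Sx :: "(nat \<Rightarrow> 'a set) \<Rightarrow> nat \<Rightarrow> 'a set" where
  "Sx e i = e (i - 1) \<union> e i"

definition Bs :: "nat \<Rightarrow> (nat \<Rightarrow> 'a set) \<Rightarrow> nat \<Rightarrow> 'a set set" where
  "Bs r e T = {X. card X = r \<and> (\<exists>i\<in>{1..T}. X \<subseteq> Sx e i)}"

locale absseq =
  fixes r :: nat and V :: "'a set" and e :: "nat \<Rightarrow> 'a set" and T :: nat
  assumes r1: "r \<ge> 1"
  and eV: "\<And>i. i \<le> T \<Longrightarrow> e i \<subseteq> V"
  and ecard: "\<And>i. i \<le> T \<Longrightarrow> card (e i) = r"
  and Scard: "\<And>i. i \<in> {1..T} \<Longrightarrow> card (Sx e i) = Suc r"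
  and C2: "\<And>i j. i \<in> {1..T} \<Longrightarrow> j \<le> T \<Longrightarrow> e j \<subseteq> Sx e i \<Longrightarrow> j = i - 1 \<or> j = i"
  and einj: "\<And>i j. i \<le> T \<Longrightarrow> j \<le> T \<Longrightarrow> e i = e j \<Longrightarrow> i = j"
  and C3: "\<And>S x. S \<subseteq> V \<Longrightarrow> card S = Suc r \<Longrightarrow> x \<in> S \<Longrightarrow>
            (\<forall>y\<in>S. y \<noteq> x \<longrightarrow> S - {y} \<in> Bs r e T) \<Longrightarrow> \<exists>i\<in>{1..T}. S = Sx e i"
begin

abbreviation "B \<equiv> Bs r e T"

lemma efin: "i \<le> T \<Longrightarrow> finite (e i)"
  using ecard[of i] r1 by (metis card.infinite not_one_le_zero)

lemma eB: "i \<le> T \<Longrightarrow> 1 \<le> T \<Longrightarrow> e i \<in> B"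
proof -
  assume a: "i \<le> T" "1 \<le> T"
  show ?thesis
  proof (cases "i = 0")
    case True
    then show ?thesis using a ecard unfolding Bs_def Sx_def by (auto intro!: bexI[of _ 1])
  next
    case False
    then show ?thesis using a ecard unfolding Bs_def Sx_def by (auto intro!: bexI[of _ i])
  qed
qed

lemma SxV: "i \<in> {1..T} \<Longrightarrow> Sx e i \<subseteq> V"
proof -
  assume "i \<in> {1..T}"
  then have "i - 1 \<le> T" "i \<le> T" by auto
  then show ?thesis unfolding Sx_def using eV[of "i - 1"] eV[of i] by blast
qed

lemma new_char:
  assumes R: "R \<subseteq> {0..T}"
  shows "bstep r V (B - e ` R) = (B - e ` R) \<union>
     {e j | j. j \<in> R \<and> (\<exists>i\<in>{1..T}. (j = i \<and> i - 1 \<notin> R) \<or> (j = i - 1 \<and> i \<notin> R))}"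
  (is "_ = ?G \<union> ?N")
proof -
  have sub1: "{f. f \<subseteq> V \<and> card f = r \<and> f \<notin> ?G \<and>
      (\<exists>w \<in> V - f. \<forall>g. g \<subseteq> insert w f \<and> card g = r \<and> g \<noteq> f \<longrightarrow> g \<in> ?G)} \<subseteq> ?N"
  proof
    fix f assume "f \<in> {f. f \<subseteq> V \<and> card f = r \<and> f \<notin> ?G \<and>
      (\<exists>w \<in> V - f. \<forall>g. g \<subseteq> insert w f \<and> card g = r \<and> g \<noteq> f \<longrightarrow> g \<in> ?G)}"
    then have fV: "f \<subseteq> V" and fc: "card f = r" and fG: "f \<notin> ?G" and
      ex: "\<exists>w \<in> V - f. \<forall>g. g \<subseteq> insert w f \<and> card g = r \<and> g \<noteq> f \<longrightarrow> g \<in> ?G"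
      by simp_all
    from ex obtain w where wV: "w \<in> V" and wf: "w \<notin> f"
      and all0: "\<forall>g. g \<subseteq> insert w f \<and> card g = r \<and> g \<noteq> f \<longrightarrow> g \<in> ?G" by blast
    have all: "\<And>g. g \<subseteq> insert w f \<Longrightarrow> card g = r \<Longrightarrow> g \<noteq> f \<Longrightarrow> g \<in> ?G"
      using all0 by blast
    have ffin: "finite f" using fc r1 by (metis card.infinite not_one_le_zero)
    let ?S = "insert w f"
    have Sc: "card ?S = Suc r" using ffin wf fc by simp
    have "\<forall>y\<in>?S. y \<noteq> w \<longrightarrow> ?S - {y} \<in> B"
    proof (intro ballI impI)
      fix y assume y: "y \<in> ?S" "y \<noteq> w"
      have "card (?S - {y}) = r" using Sc y ffin by simp
      moreover have "?S - {y} \<noteq> f" using y wf by auto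
      ultimately show "?S - {y} \<in> B" using all[of "?S - {y}"] by blast
    qed
    then obtain i where i: "i \<in> {1..T}" and Si: "?S = Sx e i"
      using C3[of ?S w] fV wV Sc by blast
    have iT: "i \<le> T" "i - 1 \<le> T" "1 \<le> i" "i - 1 \<noteq> i" using i by auto
    have fB: "f \<in> B" unfolding Bs_def using fc i Si by auto
    then obtain j where j: "j \<in> R" and fj: "f = e j" using fG by blast
    have jT: "j \<le> T" using j R by auto
    have "j = i - 1 \<or> j = i" using C2[OF i jT] fj Si by auto
    then show "f \<in> ?N"
    proof
      assume ji: "j = i - 1"
      have "i \<notin> R"
      proof
        assume iR: "i \<in> R"
        have "e i \<subseteq> ?S" using Si unfolding Sx_def by auto
        moreover have "card (e i) = r" using ecard i by auto
        moreover have "e i \<noteq> f" using fj ji einj[of i j] iT jT by auto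
        ultimately have "e i \<in> ?G" using all by blast
        then show False using iR by auto
      qed
      then show ?thesis using j fj ji i by blast
    next
      assume ji: "j = i"
      have "i - 1 \<notin> R"
      proof
        assume iR: "i - 1 \<in> R"
        have "e (i - 1) \<subseteq> ?S" using Si unfolding Sx_def by auto
        moreover have "card (e (i - 1)) = r" using ecard i by auto
        moreover have "e (i - 1) \<noteq> f" using fj ji einj[of "i - 1" j] iT jT by auto
        ultimately have "e (i - 1) \<in> ?G" using all by blast
        then show False using iR by auto
      qed
      then show ?thesis using j fj ji i by blast
    qed
  qed
  have sub2: "?N \<subseteq> {f. f \<subseteq> V \<and> card f = r \<and> f \<notin> ?G \<and>
      (\<exists>w \<in> V - f. \<forall>g. g \<subseteq> insert w f \<and> card g = r \<and> g \<noteq> f \<longrightarrow> g \<in> ?G)}"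
  proof
    fix f assume "f \<in> ?N"
    then obtain j i where j: "j \<in> R" and fj: "f = e j" and i: "i \<in> {1..T}"
      and c: "(j = i \<and> i - 1 \<notin> R) \<or> (j = i - 1 \<and> i \<notin> R)" by blast
    have jT: "j \<le> T" using j R by auto
    define oo where "oo = (if j = i then i - 1 else i)"
    have oT: "oo \<le> T" using i oo_def by auto
    have oR: "oo \<notin> R" using c oo_def by auto
    have oj: "oo \<noteq> j" using c oo_def i by auto
    have jS: "e j \<subseteq> Sx e i" using c unfolding Sx_def by auto
    have oS: "e oo \<subseteq> Sx e i" using oo_def unfolding Sx_def by auto
    have fin: "finite (Sx e i)" using Scard[OF i] by (metis card.infinite nat.distinct(1))
    have "card (e j) < card (Sx e i)" using ecard[OF jT] Scard[OF i] by simp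
    then have "\<not> Sx e i \<subseteq> e j" using card_mono[OF efin[OF jT], of "Sx e i"] by linarith
    then obtain w where w: "w \<in> Sx e i" "w \<notin> e j" by blast
    have ins: "insert w (e j) = Sx e i"
    proof (rule card_subset_eq[OF fin])
      show "insert w (e j) \<subseteq> Sx e i" using w jS by auto
      show "card (insert w (e j)) = card (Sx e i)" using w ecard[OF jT] Scard[OF i] efin[OF jT] by simp
    qed
    have n1: "f \<notin> ?G" using fj j by auto
    have n2: "w \<in> V - f" using w fj SxV[OF i] by auto
    have n3: "\<forall>g. g \<subseteq> insert w f \<and> card g = r \<and> g \<noteq> f \<longrightarrow> g \<in> ?G"
    proof (intro allI impI)
      fix g assume g: "g \<subseteq> insert w f \<and> card g = r \<and> g \<noteq> f"
      have gB: "g \<in> B" unfolding Bs_def using g ins fj i by auto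
      have "g \<notin> e ` R"
      proof
        assume "g \<in> e ` R"
        then obtain j' where j': "j' \<in> R" "g = e j'" by blast
        have j'T: "j' \<le> T" using j' R by auto
        have "j' = i - 1 \<or> j' = i" using C2[OF i j'T] g ins fj j' by auto
        then have "j' = j \<or> j' = oo" using oo_def c by auto
        then show False using g fj j' oR by auto
      qed
      then show "g \<in> ?G" using gB by blast
    qed
    have n4: "f \<subseteq> V" "card f = r" using eV[OF jT] ecard[OF jT] fj by auto
    show "f \<in> {f. f \<subseteq> V \<and> card f = r \<and> f \<notin> ?G \<and>
      (\<exists>w \<in> V - f. \<forall>g. g \<subseteq> insert w f \<and> card g = r \<and> g \<noteq> f \<longrightarrow> g \<in> ?G)}"
      unfolding mem_Collect_eq using n1 n2 n3 n4 by (intro conjI bexI[of _ w])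
  qed
  show ?thesis unfolding bstep_def using subset_antisym[OF sub1 sub2] by simp
qed

lemma bproc_Suc: "bproc r V G (Suc t) = bstep r V (bproc r V G t)"
  unfolding bproc_def by simp

lemma fwd:
  assumes T1: "1 \<le> T"
  shows "t \<le> T \<Longrightarrow> bproc r V (B - e ` {1..T}) t = B - e ` {Suc t..T}"
proof (induction t)
  case 0
  then show ?case unfolding bproc_def by simp
next
  case (Suc t)
  have tT: "t < T" using Suc.prems by simp
  have N: "{e j | j. j \<in> {Suc t..T} \<and> (\<exists>i\<in>{1..T}. (j = i \<and> i - 1 \<notin> {Suc t..T}) \<or> (j = i - 1 \<and> i \<notin> {Suc t..T}))}
       = {e (Suc t)}"
  proof (rule set_eqI, rule iffI)
    fix x assume "x \<in> {e j | j. j \<in> {Suc t..T} \<and> (\<exists>i\<in>{1..T}. (j = i \<and> i - 1 \<notin> {Suc t..T}) \<or> (j = i - 1 \<and> i \<notin> {Suc t..T}))}"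
    then obtain j i where "x = e j" "j \<in> {Suc t..T}" "i \<in> {1..T}" "(j = i \<and> i - 1 \<notin> {Suc t..T}) \<or> (j = i - 1 \<and> i \<notin> {Suc t..T})"
      by blast
    then have "j = Suc t" by auto
    then show "x \<in> {e (Suc t)}" using \<open>x = e j\<close> by simp
  next
    fix x assume "x \<in> {e (Suc t)}"
    then have "x = e (Suc t)" by simp
    moreover have "Suc t \<in> {Suc t..T}" using tT by simp
    moreover have "Suc t \<in> {1..T} \<and> Suc t - 1 \<notin> {Suc t..T}" using tT by simp
    ultimately show "x \<in> {e j | j. j \<in> {Suc t..T} \<and> (\<exists>i\<in>{1..T}. (j = i \<and> i - 1 \<notin> {Suc t..T}) \<or> (j = i - 1 \<and> i \<notin> {Suc t..T}))}"
      by blast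
  qed
  have "bproc r V (B - e ` {1..T}) (Suc t) = bstep r V (B - e ` {Suc t..T})"
    using Suc tT by (simp add: bproc_Suc)
  also have "\<dots> = (B - e ` {Suc t..T}) \<union> {e (Suc t)}"
    using new_char[of "{Suc t..T}"] N by simp
  also have "\<dots> = B - e ` {Suc (Suc t)..T}"
  proof -
    have eB': "e (Suc t) \<in> B" using eB[of "Suc t"] tT T1 by simp
    have ni: "e (Suc t) \<notin> e ` {Suc (Suc t)..T}"
    proof
      assume "e (Suc t) \<in> e ` {Suc (Suc t)..T}"
      then obtain j where "j \<in> {Suc (Suc t)..T}" "e (Suc t) = e j" by blast
      then show False using einj[of "Suc t" j] tT by auto
    qed
    have "e ` {Suc t..T} = insert (e (Suc t)) (e ` {Suc (Suc t)..T})"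
      using tT Icc_eq_insert_lb_nat[of "Suc t" T] by simp
    then show ?thesis using eB' ni by auto
  qed
  finally show ?case .
qed

lemma final_stat:
  "bstep r V (B - e ` {}) = B - e ` {}"
  using new_char[of "{}"] by simp

lemma H0_stat:
  "bstep r V (B - e ` {0..T}) = B - e ` {0..T}"
proof -
  have "{e j | j. j \<in> {0..T} \<and> (\<exists>i\<in>{1..T}. (j = i \<and> i - 1 \<notin> {0..T}) \<or> (j = i - 1 \<and> i \<notin> {0..T}))} = {}"
    by auto
  then show ?thesis using new_char[of "{0..T}"] by simp
qed

lemma bwd:
  assumes T1: "1 \<le> T"
  shows "t \<le> T \<Longrightarrow> bproc r V (B - e ` {..<T}) t = B - e ` {..<T - t}"
proof (induction t)
  case 0
  then show ?case unfolding bproc_def by simp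
next
  case (Suc t)
  have tT: "t < T" using Suc.prems by simp
  have N: "{e j | j. j \<in> {..<T - t} \<and> (\<exists>i\<in>{1..T}. (j = i \<and> i - 1 \<notin> {..<T - t}) \<or> (j = i - 1 \<and> i \<notin> {..<T - t}))}
       = {e (T - Suc t)}"
  proof (rule set_eqI, rule iffI)
    fix x assume "x \<in> {e j | j. j \<in> {..<T - t} \<and> (\<exists>i\<in>{1..T}. (j = i \<and> i - 1 \<notin> {..<T - t}) \<or> (j = i - 1 \<and> i \<notin> {..<T - t}))}"
    then obtain j i where "x = e j" "j \<in> {..<T - t}" "i \<in> {1..T}" "(j = i \<and> i - 1 \<notin> {..<T - t}) \<or> (j = i - 1 \<and> i \<notin> {..<T - t})"
      by blast
    then have "j = T - Suc t" by auto
    then show "x \<in> {e (T - Suc t)}" using \<open>x = e j\<close> by simp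
  next
    fix x assume "x \<in> {e (T - Suc t)}"
    then have "x = e (T - Suc t)" by simp
    moreover have "T - Suc t \<in> {..<T - t}" using tT by simp
    moreover have "T - t \<in> {1..T} \<and> T - Suc t = T - t - 1 \<and> T - t \<notin> {..<T - t}" using tT by simp
    ultimately show "x \<in> {e j | j. j \<in> {..<T - t} \<and> (\<exists>i\<in>{1..T}. (j = i \<and> i - 1 \<notin> {..<T - t}) \<or> (j = i - 1 \<and> i \<notin> {..<T - t}))}"
      by blast
  qed
  have "bproc r V (B - e ` {..<T}) (Suc t) = bstep r V (B - e ` {..<T - t})"
    using Suc tT by (simp add: bproc_Suc)
  also have "\<dots> = (B - e ` {..<T - t}) \<union> {e (T - Suc t)}"
  proof -
    have "{..<T - t} \<subseteq> {0..T}" by auto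
    then show ?thesis using new_char[of "{..<T - t}"] N by simp
  qed
  also have "\<dots> = B - e ` {..<T - Suc t}"
  proof -
    have eB': "e (T - Suc t) \<in> B" using eB[of "T - Suc t"] tT T1 by simp
    have ni: "e (T - Suc t) \<notin> e ` {..<T - Suc t}"
    proof
      assume "e (T - Suc t) \<in> e ` {..<T - Suc t}"
      then obtain j where j: "j \<in> {..<T - Suc t}" "e (T - Suc t) = e j" by blast
      then have "j \<le> T" "T - Suc t \<le> T" "j \<noteq> T - Suc t" by auto
      then show False using einj[of "T - Suc t" j] j by blast
    qed
    have "T - t = Suc (T - Suc t)" using tT by simp
    then have "{..<T - t} = insert (T - Suc t) {..<T - Suc t}" by (simp add: lessThan_Suc)
    then have "e ` {..<T - t} = insert (e (T - Suc t)) (e ` {..<T - Suc t})" by simp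
    then show ?thesis using eB' ni by auto
  qed
  finally show ?case .
qed

lemma abs_main:
  assumes T1: "1 \<le> T"
  defines "H \<equiv> B - e ` {1..T}"
  shows "(\<forall>X\<in>H. X \<subseteq> V \<and> card X = r) \<and>
     (\<forall>i \<le> T. e i \<subseteq> V \<and> card (e i) = r) \<and> e 0 \<in> H \<and>
     (\<forall>i \<in> {1..T}. bproc r V H i - bproc r V H (i - 1) = {e i}) \<and>
     bproc r V H (Suc T) = bproc r V H T \<and>
     stationary r V (H - {e 0}) \<and>
     (\<forall>i \<in> {1..T}. bproc r V ((H \<union> {e T}) - {e 0}) i
                     - bproc r V ((H \<union> {e T}) - {e 0}) (i - 1) = {e (T - i)})"
proof (intro conjI)
  show "\<forall>X\<in>H. X \<subseteq> V \<and> card X = r"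
  proof
    fix X assume "X \<in> H"
    then have "X \<in> B" unfolding H_def by simp
    then obtain i where "i \<in> {1..T}" "X \<subseteq> Sx e i" "card X = r" unfolding Bs_def by blast
    then show "X \<subseteq> V \<and> card X = r" using SxV by blast
  qed
  show "\<forall>i\<le>T. e i \<subseteq> V \<and> card (e i) = r" using eV ecard by blast
  show "e 0 \<in> H"
  proof -
    have "e 0 \<notin> e ` {1..T}"
    proof
      assume "e 0 \<in> e ` {1..T}"
      then obtain j where "j \<in> {1..T}" "e 0 = e j" by blast
      then show False using einj[of 0 j] by simp
    qed
    then show ?thesis unfolding H_def using eB[of 0] T1 by simp
  qed
  show "\<forall>i\<in>{1..T}. bproc r V H i - bproc r V H (i - 1) = {e i}"
  proof
    fix i assume i: "i \<in> {1..T}"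
    have a: "bproc r V H i = B - e ` {Suc i..T}" unfolding H_def using fwd[OF T1, of i] i by simp
    have "i - 1 \<le> T" "Suc (i - 1) = i" using i by auto
    then have b: "bproc r V H (i - 1) = B - e ` {i..T}" unfolding H_def using fwd[OF T1, of "i - 1"] by simp
    have eB': "e i \<in> B" using eB[of i] i by simp
    have ni: "e i \<notin> e ` {Suc i..T}"
    proof
      assume "e i \<in> e ` {Suc i..T}"
      then obtain j where "j \<in> {Suc i..T}" "e i = e j" by blast
      then show False using einj[of i j] i by auto
    qed
    have "e ` {i..T} = insert (e i) (e ` {Suc i..T})"
      using i Icc_eq_insert_lb_nat[of i T] by simp
    then show "bproc r V H i - bproc r V H (i - 1) = {e i}" using a b eB' ni by auto
  qed
  show "bproc r V H (Suc T) = bproc r V H T"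
  proof -
    have "bproc r V H T = B - e ` {}" unfolding H_def using fwd[OF T1, of T] by simp
    then show ?thesis using final_stat by (simp add: bproc_Suc)
  qed
  show "stationary r V (H - {e 0})"
  proof -
    have "e ` {0..T} = insert (e 0) (e ` {1..T})"
      using Icc_eq_insert_lb_nat[of 0 T] by simp
    then have "H - {e 0} = B - e ` {0..T}" unfolding H_def by auto
    then show ?thesis unfolding stationary_def using H0_stat by simp
  qed
  show "\<forall>i\<in>{1..T}. bproc r V (H \<union> {e T} - {e 0}) i - bproc r V (H \<union> {e T} - {e 0}) (i - 1) = {e (T - i)}"
  proof
    fix i assume i: "i \<in> {1..T}"
    have G0: "H \<union> {e T} - {e 0} = B - e ` {..<T}"
    proof -
      have eT: "e T \<in> B" using eB[of T] T1 by simp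
      have "e T \<notin> e ` {..<T}"
      proof
        assume "e T \<in> e ` {..<T}"
        then obtain j where "j < T" "e T = e j" by blast
        then show False using einj[of T j] by simp
      qed
      moreover have "e T \<noteq> e 0" using einj[of T 0] T1 by auto
      moreover have "e ` {0..T} = insert (e 0) (e ` {1..T})"
        using Icc_eq_insert_lb_nat[of 0 T] by simp
      moreover have "e ` {0..T} = insert (e T) (e ` {..<T})"
      proof -
        have "{0..T} = insert T {..<T}" by auto
        then show ?thesis by simp
      qed
      ultimately show ?thesis unfolding H_def using eT by auto
    qed
    have a: "bproc r V (H \<union> {e T} - {e 0}) i = B - e ` {..<T - i}" using G0 bwd[OF T1, of i] i by simp
    have "i - 1 \<le> T" using i by auto
    then have b: "bproc r V (H \<union> {e T} - {e 0}) (i - 1) = B - e ` {..<T - (i - 1)}" using G0 bwd[OF T1, of "i - 1"] by simp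
    have eB': "e (T - i) \<in> B" using eB[of "T - i"] T1 by simp
    have ni: "e (T - i) \<notin> e ` {..<T - i}"
    proof
      assume "e (T - i) \<in> e ` {..<T - i}"
      then obtain j where j: "j \<in> {..<T - i}" "e (T - i) = e j" by blast
      then have "j \<le> T" "T - i \<le> T" "j \<noteq> T - i" by auto
      then show False using einj[of "T - i" j] j by blast
    qed
    have "T - (i - 1) = Suc (T - i)" using i by auto
    then have "e ` {..<T - (i - 1)} = insert (e (T - i)) (e ` {..<T - i})" by (simp add: lessThan_Suc)
    then show "bproc r V (H \<union> {e T} - {e 0}) i - bproc r V (H \<union> {e T} - {e 0}) (i - 1) = {e (T - i)}"
      using a b eB' ni by auto
  qed
qed

end


definition adj :: "nat \<Rightarrow> (nat \<Rightarrow> nat) \<Rightarrow> (nat \<Rightarrow> nat) \<Rightarrow> bool" where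
  "adj d P Q \<longleftrightarrow> (\<exists>j\<in>{1..d}. (P j = Suc (Q j) \<or> Q j = Suc (P j)) \<and> (\<forall>l\<in>{1..d}. l \<noteq> j \<longrightarrow> P l = Q l))"

definition hasE :: "(nat \<Rightarrow> nat \<Rightarrow> nat) \<Rightarrow> nat \<Rightarrow> nat \<Rightarrow> nat \<Rightarrow> nat \<Rightarrow> nat \<Rightarrow> nat \<Rightarrow> bool" where
  "hasE f N j l a a' b \<longleftrightarrow> (\<exists>s. Suc s < N \<and> ((f s j = a \<and> f (Suc s) j = a') \<or> (f s j = a' \<and> f (Suc s) j = a)) \<and> f s l = b)"

definition nosq :: "nat \<Rightarrow> (nat \<Rightarrow> nat \<Rightarrow> nat) \<Rightarrow> nat \<Rightarrow> bool" where
  "nosq d f N \<longleftrightarrow> (\<forall>j\<in>{1..d}. \<forall>l\<in>{1..d}. \<forall>a a' b b'. j \<noteq> l \<longrightarrow> a \<noteq> a' \<longrightarrow> b \<noteq> b' \<longrightarrow>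
     \<not> (hasE f N j l a a' b \<and> hasE f N j l a a' b' \<and> hasE f N l j b b' a \<and> hasE f N l j b b' a'))"

definition goodwalk :: "nat \<Rightarrow> nat \<Rightarrow> (nat \<Rightarrow> nat \<Rightarrow> nat) \<Rightarrow> nat \<Rightarrow> bool" where
  "goodwalk d n f N \<longleftrightarrow>
     (\<forall>s<N. \<forall>t<N. (\<forall>l\<in>{1..d}. f s l = f t l) \<longrightarrow> s = t) \<and>
     (\<forall>s. Suc s < N \<longrightarrow> adj d (f s) (f (Suc s))) \<and>
     (\<forall>s<N. \<forall>t<N. adj d (f s) (f t) \<longrightarrow> s = Suc t \<or> t = Suc s) \<and>
     nosq d f N \<and>
     (\<forall>s<N. \<forall>l\<in>{1..d}. 1 \<le> f s l \<and> f s l \<le> n)"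

definition pt :: "nat \<Rightarrow> (nat \<Rightarrow> nat) \<Rightarrow> (nat \<times> nat) set" where
  "pt d P = (\<lambda>l. (l, P l)) ` {1..d}"

lemma mem_pt: "(l, x) \<in> pt d P \<longleftrightarrow> l \<in> {1..d} \<and> x = P l"
  unfolding pt_def by auto

lemma card_pt: "card (pt d P) = d"
proof -
  have "inj_on (\<lambda>l. (l, P l)) {1..d}" by (rule inj_onI) auto
  then show ?thesis unfolding pt_def by (simp add: card_image)
qed

lemma finite_pt: "finite (pt d P)"
  unfolding pt_def by simp

lemma pt_cong: "(\<forall>l\<in>{1..d}. P l = Q l) \<Longrightarrow> pt d P = pt d Q"
  unfolding pt_def by (auto simp: image_def)

lemma pt_eqD: "pt d P = pt d Q \<Longrightarrow> \<forall>l\<in>{1..d}. P l = Q l"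
proof
  fix l assume e: "pt d P = pt d Q" and l: "l \<in> {1..d}"
  have "(l, P l) \<in> pt d Q" using e l mem_pt[of l "P l" d P] by simp
  then show "P l = Q l" using mem_pt by simp
qed

lemma adj_cong:
  assumes "adj d P Q" "\<forall>l\<in>{1..d}. P l = P' l" "\<forall>l\<in>{1..d}. Q l = Q' l"
  shows "adj d P' Q'"
  using assms unfolding adj_def by metis

lemma adj_upd:
  assumes "m \<in> {1..d}" "c = Suc (P m) \<or> P m = Suc c"
  shows "adj d P (P(m := c))"
  unfolding adj_def using assms by (intro bexI[of _ m]) auto

lemma card_minus_one:
  assumes "finite A" "B \<subseteq> A" "card A = Suc (card B)"
  shows "\<exists>z. z \<in> A \<and> z \<notin> B \<and> A = insert z B"
proof -
  have "card (A - B) = 1" using assms by (simp add: card_Diff_subset finite_subset)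
  then obtain z where "A - B = {z}" by (rule card_1_singletonE)
  then show ?thesis using assms(2) by blast
qed

locale cw =
  fixes d n :: nat and f :: "nat \<Rightarrow> nat \<Rightarrow> nat" and T :: nat
  assumes d2: "d \<ge> 2" and gw: "goodwalk d n f (Suc T)" and T1: "1 \<le> T"
begin

definition v :: "nat \<times> nat" where "v = (Suc d, 1)"
definition ee :: "nat \<Rightarrow> (nat \<times> nat) set" where "ee i = insert v (pt d (f i))"
definition EE :: "nat \<Rightarrow> (nat \<times> nat) set" where "EE i = pt d (f (i - 1)) \<union> pt d (f i)"

lemma W1: "s \<le> T \<Longrightarrow> t \<le> T \<Longrightarrow> (\<forall>l\<in>{1..d}. f s l = f t l) \<Longrightarrow> s = t"
  using gw unfolding goodwalk_def by auto

lemma W3: "s \<le> T \<Longrightarrow> t \<le> T \<Longrightarrow> adj d (f s) (f t) \<Longrightarrow> s = Suc t \<or> t = Suc s"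
  using gw unfolding goodwalk_def by auto

lemma NS: "nosq d f (Suc T)"
  using gw unfolding goodwalk_def by auto

lemma edge_adj: "i \<in> {1..T} \<Longrightarrow> adj d (f (i - 1)) (f i)"
proof -
  assume i: "i \<in> {1..T}"
  then have "Suc (i - 1) < Suc T" "Suc (i - 1) = i" by auto
  then show ?thesis using gw unfolding goodwalk_def by metis
qed

lemma v_notin_pt: "v \<notin> pt d P"
  unfolding v_def using mem_pt by auto

lemma v_notin_EE: "v \<notin> EE i"
  unfolding EE_def using v_notin_pt by auto

lemma memE: "(l, x) \<in> EE i \<longleftrightarrow> l \<in> {1..d} \<and> (x = f (i - 1) l \<or> x = f i l)"
  unfolding EE_def using mem_pt by auto

lemma Sx_ee: "Sx ee i = insert v (EE i)"
  unfolding Sx_def ee_def EE_def by auto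

lemma edge_dir:
  assumes i: "i \<in> {1..T}"
  obtains j where "j \<in> {1..d}" "f (i - 1) j = Suc (f i j) \<or> f i j = Suc (f (i - 1) j)"
     "\<And>l. l \<in> {1..d} \<Longrightarrow> l \<noteq> j \<Longrightarrow> f (i - 1) l = f i l"
  using edge_adj[OF i] unfolding adj_def by blast

lemma finite_EE: "finite (EE i)"
  unfolding EE_def using finite_pt by simp

lemma card_EE: assumes i: "i \<in> {1..T}" shows "card (EE i) = Suc d"
proof -
  obtain j where j: "j \<in> {1..d}" "f (i - 1) j = Suc (f i j) \<or> f i j = Suc (f (i - 1) j)"
     "\<And>l. l \<in> {1..d} \<Longrightarrow> l \<noteq> j \<Longrightarrow> f (i - 1) l = f i l" using edge_dir[OF i] by blast
  have "EE i = insert (j, f i j) (pt d (f (i - 1)))"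
  proof (rule set_eqI)
    fix y :: "nat \<times> nat"
    obtain l x where y: "y = (l, x)" by fastforce
    show "y \<in> EE i \<longleftrightarrow> y \<in> insert (j, f i j) (pt d (f (i - 1)))"
      unfolding y memE mem_pt insert_iff using j by (cases "l = j") auto
  qed
  moreover have "(j, f i j) \<notin> pt d (f (i - 1))" using j mem_pt by auto
  ultimately show ?thesis using card_pt finite_pt by simp
qed

lemma two_in_EE:
  assumes i: "i \<in> {1..T}" and a: "(l, x) \<in> EE i" "(l, y) \<in> EE i" "x \<noteq> y"
  shows "(x = Suc y \<or> y = Suc x) \<and> ((f (i - 1) l = x \<and> f i l = y) \<or> (f (i - 1) l = y \<and> f i l = x))
     \<and> (\<forall>l'\<in>{1..d}. l' \<noteq> l \<longrightarrow> f (i - 1) l' = f i l')"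
proof -
  obtain j where j: "j \<in> {1..d}" "f (i - 1) j = Suc (f i j) \<or> f i j = Suc (f (i - 1) j)"
     "\<And>l. l \<in> {1..d} \<Longrightarrow> l \<noteq> j \<Longrightarrow> f (i - 1) l = f i l" using edge_dir[OF i] by blast
  have l: "l \<in> {1..d}" and xy: "x = f (i - 1) l \<or> x = f i l" "y = f (i - 1) l \<or> y = f i l"
    using a memE by auto
  have "l = j"
  proof (rule ccontr)
    assume "l \<noteq> j"
    then have "f (i - 1) l = f i l" using j(3)[OF l] by simp
    then show False using xy a(3) by auto
  qed
  then show ?thesis using j xy a(3) by auto
qed

lemma three_in_EE:
  assumes i: "i \<in> {1..T}" and a: "(l, x) \<in> EE i" "(l, y) \<in> EE i" "(l, z) \<in> EE i"
    "x \<noteq> y" "y \<noteq> z" "x \<noteq> z"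
  shows False
  using a memE by auto

lemma adj_in_EE:
  assumes i: "i \<in> {1..T}" and a: "(l, x) \<in> EE i" "(l, y) \<in> EE i" "x \<noteq> y"
  shows "x = Suc y \<or> y = Suc x"
  using two_in_EE[OF assms] by blast

lemma hasE_in_EE:
  assumes i: "i \<in> {1..T}" and a: "(l, x) \<in> EE i" "(l, y) \<in> EE i" "x \<noteq> y"
    and b: "(l', z) \<in> EE i" "l' \<noteq> l"
  shows "hasE f (Suc T) l l' x y z"
proof -
  have t: "((f (i - 1) l = x \<and> f i l = y) \<or> (f (i - 1) l = y \<and> f i l = x))
     \<and> (\<forall>l'\<in>{1..d}. l' \<noteq> l \<longrightarrow> f (i - 1) l' = f i l')" using two_in_EE[OF assms(1-4)] by blast
  have l': "l' \<in> {1..d}" "z = f (i - 1) l' \<or> z = f i l'" using b memE by auto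
  have z: "f (i - 1) l' = z" using t l' b(2) by auto
  have s: "Suc (i - 1) < Suc T" "Suc (i - 1) = i" using i by auto
  show ?thesis unfolding hasE_def using t z s by (intro exI[of _ "i - 1"]) auto
qed

lemma pt_sub_EE:
  assumes i: "i \<in> {1..T}" and sub: "pt d P \<subseteq> EE i"
  shows "(\<forall>l\<in>{1..d}. P l = f (i - 1) l) \<or> (\<forall>l\<in>{1..d}. P l = f i l)"
proof -
  obtain j where j: "j \<in> {1..d}" "f (i - 1) j = Suc (f i j) \<or> f i j = Suc (f (i - 1) j)"
     "\<And>l. l \<in> {1..d} \<Longrightarrow> l \<noteq> j \<Longrightarrow> f (i - 1) l = f i l" using edge_dir[OF i] by blast
  have all: "\<And>l. l \<in> {1..d} \<Longrightarrow> P l = f (i - 1) l \<or> P l = f i l"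
    using sub memE mem_pt by blast
  show ?thesis
  proof (cases "P j = f (i - 1) j")
    case True
    then show ?thesis using all j(3) by metis
  next
    case False
    then have "P j = f i j" using all j(1) by blast
    then show ?thesis using all j(3) by metis
  qed
qed

definition Bc where "Bc = Bs (Suc d) ee T"

lemma Bc_sub: "X \<in> Bc \<Longrightarrow> \<exists>i\<in>{1..T}. X - {v} \<subseteq> EE i"
  unfolding Bc_def Bs_def using Sx_ee by auto

lemma layer_ne_v: "l \<in> {1..d} \<Longrightarrow> (l, x) \<noteq> v"
  unfolding v_def by auto

end


context cw begin

lemma walkpt:
  assumes i: "i \<in> {1..T}" and sub: "pt d P \<subseteq> EE i"
  shows "\<exists>s\<le>T. \<forall>l\<in>{1..d}. f s l = P l"
proof -
  have "i - 1 \<le> T" "i \<le> T" using i by auto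
  then show ?thesis using pt_sub_EE[OF i sub] by metis
qed

lemma other_layer:
  assumes "m \<in> {1..d}" obtains l where "l \<in> {1..d}" "l \<noteq> m"
proof -
  have "(if m = 1 then 2 else 1) \<in> {1..d}" "(if m = 1 then 2 else (1::nat)) \<noteq> m" using d2 assms by auto
  then show ?thesis using that by blast
qed

lemma closing:
  assumes s: "s \<le> T" and t: "t \<le> T" and a: "adj d (f s) (f t)"
  shows "\<exists>i\<in>{1..T}. pt d (f s) \<union> pt d (f t) = EE i"
proof -
  have "s = Suc t \<or> t = Suc s" using W3[OF s t a] .
  then show ?thesis
  proof
    assume st: "s = Suc t"
    then have "s \<in> {1..T}" "EE s = pt d (f t) \<union> pt d (f s)" using s unfolding EE_def by auto
    then show ?thesis by blast
  next
    assume st: "t = Suc s"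
    then have "t \<in> {1..T}" "EE t = pt d (f s) \<union> pt d (f t)" using t unfolding EE_def by auto
    then show ?thesis by blast
  qed
qed

lemma caseA:
  assumes SV: "\<forall>y\<in>S. y \<noteq> v \<longrightarrow> fst y \<in> {1..d}" and vS: "v \<notin> S"
  and cS: "card S = Suc (Suc d)" and xS: "x \<in> S"
  and good: "\<forall>y\<in>S. y \<noteq> x \<longrightarrow> S - {y} \<in> Bc"
  shows False
proof -
  have goodE: "\<And>y. y \<in> S \<Longrightarrow> y \<noteq> x \<Longrightarrow> \<exists>i\<in>{1..T}. S - {y} \<subseteq> EE i"
  proof -
    fix y assume "y \<in> S" "y \<noteq> x"
    then obtain i where "i \<in> {1..T}" "S - {y} - {v} \<subseteq> EE i" using good Bc_sub by blast
    moreover have "S - {y} - {v} = S - {y}" using vS by auto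
    ultimately show "\<exists>i\<in>{1..T}. S - {y} \<subseteq> EE i" by auto
  qed
  have finS: "finite S" using cS by (metis card.infinite nat.distinct(1))
  have "S - {x} \<noteq> {}"
  proof
    assume "S - {x} = {}"
    then have "S \<subseteq> {x}" by auto
    then have "card S \<le> 1" using card_mono[of "{x}" S] by simp
    then show False using cS by simp
  qed
  then obtain y1 where y1: "y1 \<in> S" "y1 \<noteq> x" by blast
  obtain i where i: "i \<in> {1..T}" and sub1: "S - {y1} \<subseteq> EE i" using goodE[OF y1] by blast
  have "card (S - {y1}) = Suc d" using cS y1 finS by simp
  then have Sy1: "S - {y1} = EE i" using card_subset_eq[OF finite_EE sub1] card_EE[OF i] by simp
  have Sdef: "S = insert y1 (EE i)" using Sy1 y1 by auto
  obtain m c where y1mc: "y1 = (m, c)" by fastforce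
  have m: "m \<in> {1..d}" using SV y1 y1mc vS by auto
  have y1E: "y1 \<notin> EE i" using Sy1 by auto
  define p where "p = f (i - 1)"
  define q where "q = f i"
  have cpq: "c \<noteq> p m" "c \<noteq> q m" using y1E y1mc memE m unfolding p_def q_def by auto
  obtain j where j: "j \<in> {1..d}" "p j = Suc (q j) \<or> q j = Suc (p j)"
     "\<And>l. l \<in> {1..d} \<Longrightarrow> l \<noteq> j \<Longrightarrow> p l = q l" using edge_dir[OF i] unfolding p_def q_def by blast
  have pq: "p j \<noteq> q j" using j(2) by auto
  have inS: "\<And>l. l \<in> {1..d} \<Longrightarrow> (l, p l) \<in> S" "\<And>l. l \<in> {1..d} \<Longrightarrow> (l, q l) \<in> S" "(m, c) \<in> S"
    using Sdef memE y1mc unfolding p_def q_def by auto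
  show False
  proof (cases "m = j")
    case True
    obtain l where l: "l \<in> {1..d}" "l \<noteq> j" using other_layer[OF j(1)] by blast
    have yx: "(l, p l) = x"
    proof (rule ccontr)
      assume "(l, p l) \<noteq> x"
      then obtain i' where i': "i' \<in> {1..T}" "S - {(l, p l)} \<subseteq> EE i'" using goodE inS(1)[OF l(1)] by blast
      have t1: "(j, p j) \<in> EE i'" "(j, q j) \<in> EE i'" "(j, c) \<in> EE i'"
        using i'(2) inS(1)[OF j(1)] inS(2)[OF j(1)] inS(3) l(2) True by auto
      have t2: "p j \<noteq> q j" "q j \<noteq> c" "p j \<noteq> c" using cpq True pq by simp_all
      show False by (rule three_in_EE[OF i'(1) t1 t2])
    qed
    have A1: "c = Suc (p j) \<or> p j = Suc c"
    proof -
      have "(j, q j) \<noteq> x" using yx l(2) by auto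
      then obtain i' where i': "i' \<in> {1..T}" "S - {(j, q j)} \<subseteq> EE i'" using goodE inS(2)[OF j(1)] by blast
      have "(j, p j) \<in> EE i'" "(j, c) \<in> EE i'" using i'(2) inS(1)[OF j(1)] inS(3) pq cpq True by auto
      then show ?thesis using adj_in_EE[OF i'(1)] cpq True by metis
    qed
    have A2: "c = Suc (q j) \<or> q j = Suc c"
    proof -
      have "(j, p j) \<noteq> x" using yx l(2) by auto
      then obtain i' where i': "i' \<in> {1..T}" "S - {(j, p j)} \<subseteq> EE i'" using goodE inS(1)[OF j(1)] by blast
      have "(j, q j) \<in> EE i'" "(j, c) \<in> EE i'" using i'(2) inS(2)[OF j(1)] inS(3) pq cpq True by auto
      then show ?thesis using adj_in_EE[OF i'(1)] cpq True by metis
    qed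
    show False using A1 A2 j(2) by linarith
  next
    case False
    have pmq: "p m = q m" using j(3)[OF m False] .
    define p' where "p' = p(m := c)"
    define q' where "q' = q(m := c)"
    have unit: "c = Suc (p m) \<or> p m = Suc c"
    proof -
      obtain y where y: "y \<in> {(j, p j), (j, q j)}" "y \<noteq> x" using pq by (cases "(j, p j) = x") auto
      then obtain i' where i': "i' \<in> {1..T}" "S - {y} \<subseteq> EE i'" using goodE inS j(1) by blast
      have "(m, p m) \<in> EE i'" "(m, c) \<in> EE i'" using i'(2) y(1) inS m False by auto
      then show ?thesis using adj_in_EE[OF i'(1)] cpq by metis
    qed
    have wp': "\<exists>s\<le>T. \<forall>l\<in>{1..d}. f s l = p' l"
    proof -
      obtain y where y: "y \<in> {(j, q j), (m, p m)}" "y \<noteq> x" using False by (cases "(j, q j) = x") auto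
      then obtain i' where i': "i' \<in> {1..T}" "S - {y} \<subseteq> EE i'" using goodE inS j(1) m by blast
      have "pt d p' \<subseteq> S - {y}"
      proof
        fix z assume "z \<in> pt d p'"
        then obtain l where l: "l \<in> {1..d}" "z = (l, p' l)" unfolding pt_def by blast
        show "z \<in> S - {y}"
        proof (cases "l = m")
          case True
          then show ?thesis using l y inS cpq False unfolding p'_def by auto
        next
          case False
          then show ?thesis using l y inS pq unfolding p'_def by auto
        qed
      qed
      then show ?thesis using walkpt[OF i'(1)] i'(2) by blast
    qed
    have wq': "\<exists>s\<le>T. \<forall>l\<in>{1..d}. f s l = q' l"
    proof -
      obtain y where y: "y \<in> {(j, p j), (m, p m)}" "y \<noteq> x" using False by (cases "(j, p j) = x") auto
      then obtain i' where i': "i' \<in> {1..T}" "S - {y} \<subseteq> EE i'" using goodE inS j(1) m by blast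
      have "pt d q' \<subseteq> S - {y}"
      proof
        fix z assume "z \<in> pt d q'"
        then obtain l where l: "l \<in> {1..d}" "z = (l, q' l)" unfolding pt_def by blast
        show "z \<in> S - {y}"
        proof (cases "l = m")
          case True
          then show ?thesis using l y inS cpq False unfolding q'_def by auto
        next
          case False
          then show ?thesis using l y inS pq pmq unfolding q'_def by auto
        qed
      qed
      then show ?thesis using walkpt[OF i'(1)] i'(2) by blast
    qed
    obtain s1 where s1: "s1 \<le> T" "\<forall>l\<in>{1..d}. f s1 l = p' l" using wp' by blast
    obtain s2 where s2: "s2 \<le> T" "\<forall>l\<in>{1..d}. f s2 l = q' l" using wq' by blast
    have iT: "i - 1 \<le> T" "i \<le> T" "i \<ge> 1" using i by auto
    have a1: "adj d (f (i - 1)) (f s1)"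
    proof -
      have "adj d p p'" using adj_upd[OF m, of c p] unit unfolding p'_def by simp
      moreover have "\<forall>l\<in>{1..d}. p l = f (i - 1) l" unfolding p_def by simp
      moreover have "\<forall>l\<in>{1..d}. p' l = f s1 l" using s1(2) by simp
      ultimately show ?thesis by (rule adj_cong)
    qed
    have a2: "adj d (f i) (f s2)"
    proof -
      have "adj d q q'" using adj_upd[OF m, of c q] unit pmq unfolding q'_def by simp
      moreover have "\<forall>l\<in>{1..d}. q l = f i l" unfolding q_def by simp
      moreover have "\<forall>l\<in>{1..d}. q' l = f s2 l" using s2(2) by simp
      ultimately show ?thesis by (rule adj_cong)
    qed
    have a3: "adj d (f s1) (f s2)"
    proof -
      have "adj d p' q'" unfolding adj_def p'_def q'_def using j(1,3) j(2) False by (intro bexI[of _ j]) simp_all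
      moreover have "\<forall>l\<in>{1..d}. p' l = f s1 l" using s1(2) by simp
      moreover have "\<forall>l\<in>{1..d}. q' l = f s2 l" using s2(2) by simp
      ultimately show ?thesis by (rule adj_cong)
    qed
    have d1: "s1 \<noteq> i - 1"
    proof
      assume "s1 = i - 1"
      then have "f s1 m = p m" unfolding p_def by simp
      then show False using s1(2) m cpq unfolding p'_def by auto
    qed
    have d2': "s1 \<noteq> i"
    proof
      assume "s1 = i"
      then have "f s1 j = q j" unfolding q_def by simp
      then show False using s1(2) j(1) False pq unfolding p'_def by auto
    qed
    have d3: "s2 \<noteq> i"
    proof
      assume "s2 = i"
      then have "f s2 m = q m" unfolding q_def by simp
      then show False using s2(2) m cpq unfolding q'_def by auto
    qed
    have d4: "s2 \<noteq> i - 1"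
    proof
      assume "s2 = i - 1"
      then have "f s2 j = p j" unfolding p_def by simp
      then show False using s2(2) j(1) False pq unfolding q'_def by auto
    qed
    have e1: "i - 1 = Suc s1 \<or> s1 = Suc (i - 1)" using W3[OF iT(1) s1(1) a1] .
    have e2: "i = Suc s2 \<or> s2 = Suc i" using W3[OF iT(2) s2(1) a2] .
    have e3: "s1 = Suc s2 \<or> s2 = Suc s1" using W3[OF s1(1) s2(1) a3] .
    show False using e1 e2 e3 d1 d2' d3 d4 iT by arith
  qed
qed

end


context cw begin

lemma caseB:
  assumes SV: "\<forall>y\<in>S. y \<noteq> v \<longrightarrow> fst y \<in> {1..d}" and vS: "v \<in> S"
  and cS: "card S = Suc (Suc d)"
  and good: "\<forall>y\<in>S. y \<noteq> v \<longrightarrow> S - {y} \<in> Bc"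
  shows "\<exists>i\<in>{1..T}. S = Sx ee i"
proof -
  define W where "W = S - {v}"
  have SW: "S = insert v W" unfolding W_def using vS by auto
  have vW: "v \<notin> W" unfolding W_def by simp
  have finS: "finite S" using cS by (metis card.infinite nat.distinct(1))
  have finW: "finite W" unfolding W_def using finS by simp
  have cW: "card W = Suc d" unfolding W_def using cS vS finS by simp
  have WL: "\<And>y. y \<in> W \<Longrightarrow> fst y \<in> {1..d}" using SV unfolding W_def by auto
  have goodW: "\<And>w. w \<in> W \<Longrightarrow> \<exists>i\<in>{1..T}. W - {w} \<subseteq> EE i"
  proof -
    fix w assume w: "w \<in> W"
    then have "w \<in> S" "w \<noteq> v" unfolding W_def by auto
    then obtain i where "i \<in> {1..T}" "S - {w} - {v} \<subseteq> EE i" using good Bc_sub by blast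
    moreover have "S - {w} - {v} = W - {w}" unfolding W_def by auto
    ultimately show "\<exists>i\<in>{1..T}. W - {w} \<subseteq> EE i" by auto
  qed
  have CLW: "\<And>P Q s t. s \<le> T \<Longrightarrow> t \<le> T \<Longrightarrow> (\<forall>l\<in>{1..d}. f s l = P l) \<Longrightarrow> (\<forall>l\<in>{1..d}. f t l = Q l)
      \<Longrightarrow> adj d P Q \<Longrightarrow> W = pt d P \<union> pt d Q \<Longrightarrow> \<exists>i\<in>{1..T}. S = Sx ee i"
  proof -
    fix P Q s t assume s: "s \<le> T" and t: "t \<le> T" and sP: "\<forall>l\<in>{1..d}. f s l = P l"
      and tQ: "\<forall>l\<in>{1..d}. f t l = Q l" and a: "adj d P Q" and WPQ: "W = pt d P \<union> pt d Q"
    have "\<forall>l\<in>{1..d}. P l = f s l" "\<forall>l\<in>{1..d}. Q l = f t l" using sP tQ by auto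
    then have "adj d (f s) (f t)" using adj_cong[OF a] by blast
    then obtain i where i: "i \<in> {1..T}" "pt d (f s) \<union> pt d (f t) = EE i" using closing[OF s t] by blast
    have "pt d (f s) = pt d P" "pt d (f t) = pt d Q" using pt_cong sP tQ by auto
    then have "W = EE i" using WPQ i(2) by simp
    then show "\<exists>i\<in>{1..T}. S = Sx ee i" using i(1) SW Sx_ee by auto
  qed
  have "W \<noteq> {}" using cW by auto
  then obtain w0 where w0: "w0 \<in> W" by blast
  obtain i where i: "i \<in> {1..T}" and sub0: "W - {w0} \<subseteq> EE i" using goodW[OF w0] by blast
  have "card (EE i) = Suc (card (W - {w0}))" using card_EE[OF i] cW w0 finW by simp
  then obtain z where z: "z \<in> EE i" "z \<notin> W - {w0}" "EE i = insert z (W - {w0})"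
    using card_minus_one[OF finite_EE sub0] by blast
  show ?thesis
  proof (cases "w0 = z")
    case True
    then have "W = EE i" using z w0 by auto
    then show ?thesis using i SW Sx_ee by auto
  next
    case False
    have w0E: "w0 \<notin> EE i" using z False by auto
    have Wdef: "W = insert w0 (EE i - {z})" using z w0 by auto
    obtain m0 c where w0mc: "w0 = (m0, c)" by fastforce
    have m0: "m0 \<in> {1..d}" using WL[OF w0] w0mc by simp
    obtain mz zv where zmz: "z = (mz, zv)" by fastforce
    define p where "p = f (i - 1)"
    define q where "q = f i"
    have mz: "mz \<in> {1..d}" "zv = p mz \<or> zv = q mz" using z(1) zmz memE unfolding p_def q_def by auto
    have cpq: "c \<noteq> p m0" "c \<noteq> q m0" using w0E w0mc memE m0 unfolding p_def q_def by auto
    obtain j where j: "j \<in> {1..d}" "p j = Suc (q j) \<or> q j = Suc (p j)"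
       "\<And>l. l \<in> {1..d} \<Longrightarrow> l \<noteq> j \<Longrightarrow> p l = q l" using edge_dir[OF i] unfolding p_def q_def by blast
    have pq: "p j \<noteq> q j" using j(2) by auto
    have iT: "i - 1 \<le> T" "i \<le> T" using i by auto
    have memW: "\<And>l x. (l, x) \<in> W \<longleftrightarrow> (l, x) = (m0, c) \<or> (l \<in> {1..d} \<and> (x = p l \<or> x = q l) \<and> (l, x) \<noteq> (mz, zv))"
      using Wdef w0mc zmz memE unfolding p_def q_def by auto
    have gW: "\<And>l x. (l, x) \<in> W \<Longrightarrow> \<exists>i'\<in>{1..T}. W - {(l, x)} \<subseteq> EE i'" using goodW by blast
    have generic: "\<And>P sP. sP \<le> T \<Longrightarrow> (\<forall>l\<in>{1..d}. f sP l = P l) \<Longrightarrow> W = insert (m0, c) (pt d P)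
        \<Longrightarrow> c \<noteq> P m0 \<Longrightarrow> \<exists>i\<in>{1..T}. S = Sx ee i"
    proof -
      fix P sP assume sP: "sP \<le> T" and fP: "\<forall>l\<in>{1..d}. f sP l = P l" and WP: "W = insert (m0, c) (pt d P)"
        and cP: "c \<noteq> P m0"
      obtain l where l: "l \<in> {1..d}" "l \<noteq> m0" using other_layer[OF m0] by blast
      have "(l, P l) \<in> W" using WP l mem_pt by auto
      then obtain i' where i': "i' \<in> {1..T}" "W - {(l, P l)} \<subseteq> EE i'" using gW by blast
      have "(m0, P m0) \<in> EE i'" "(m0, c) \<in> EE i'" using i'(2) WP l m0 mem_pt by auto
      then have u: "c = Suc (P m0) \<or> P m0 = Suc c" using adj_in_EE[OF i'(1)] cP by metis
      define P' where "P' = P(m0 := c)"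
      have "(m0, P m0) \<in> W" using WP m0 mem_pt by auto
      then obtain i'' where i'': "i'' \<in> {1..T}" "W - {(m0, P m0)} \<subseteq> EE i''" using gW by blast
      have "pt d P' \<subseteq> W - {(m0, P m0)}"
      proof
        fix y assume "y \<in> pt d P'"
        then obtain l' where l': "l' \<in> {1..d}" "y = (l', P' l')" unfolding pt_def by blast
        show "y \<in> W - {(m0, P m0)}" using l' WP cP mem_pt unfolding P'_def by (cases "l' = m0") auto
      qed
      then obtain s' where s': "s' \<le> T" "\<forall>l\<in>{1..d}. f s' l = P' l" using walkpt[OF i''(1)] i''(2) by blast
      have a: "adj d P P'" using adj_upd[of m0 d c P] m0 u unfolding P'_def by simp
      have "W = pt d P \<union> pt d P'"
      proof (rule set_eqI)
        fix y :: "nat \<times> nat"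
        obtain l' x' where y: "y = (l', x')" by fastforce
        show "y \<in> W \<longleftrightarrow> y \<in> pt d P \<union> pt d P'"
          unfolding y WP P'_def using m0 mem_pt by (cases "l' = m0") auto
      qed
      then show "\<exists>i\<in>{1..T}. S = Sx ee i" using CLW[OF sP s'(1) fP s'(2) a] by blast
    qed
    show ?thesis
    proof (cases "mz = j")
      case True
      show ?thesis
      proof (cases "zv = q j")
        case True
        have key: "\<And>l' x'. l' \<in> {1..d} \<Longrightarrow> ((x' = p l' \<or> x' = q l') \<and> (l', x') \<noteq> (j, q j)) = (x' = p l')"
        proof -
          fix l' x' assume l': "l' \<in> {1..d}"
          show "((x' = p l' \<or> x' = q l') \<and> (l', x') \<noteq> (j, q j)) = (x' = p l')"
          proof (cases "l' = j")
            case True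
            then show ?thesis using pq by auto
          next
            case False
            then have "p l' = q l'" using j(3) l' by blast
            then show ?thesis using False by auto
          qed
        qed
        have memW': "\<And>l x. (l, x) \<in> W \<longleftrightarrow> (l, x) = (m0, c) \<or> (l \<in> {1..d} \<and> (x = p l \<or> x = q l) \<and> (l, x) \<noteq> (j, q j))"
          using memW True \<open>mz = j\<close> by simp
        have "W = insert (m0, c) (pt d p)"
        proof (rule set_eqI)
          fix y :: "nat \<times> nat"
          obtain l' x' where y: "y = (l', x')" by fastforce
          show "y \<in> W \<longleftrightarrow> y \<in> insert (m0, c) (pt d p)"
            unfolding y memW' insert_iff mem_pt using key[of l' x'] by blast
        qed
        then show ?thesis using generic[of "i - 1" p] iT cpq unfolding p_def by simp
      next
        case False
        then have zp: "zv = p j" using mz \<open>mz = j\<close> by simp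
        have key: "\<And>l' x'. l' \<in> {1..d} \<Longrightarrow> ((x' = p l' \<or> x' = q l') \<and> (l', x') \<noteq> (j, p j)) = (x' = q l')"
        proof -
          fix l' x' assume l': "l' \<in> {1..d}"
          show "((x' = p l' \<or> x' = q l') \<and> (l', x') \<noteq> (j, p j)) = (x' = q l')"
          proof (cases "l' = j")
            case True
            then show ?thesis using pq by auto
          next
            case False
            then have "p l' = q l'" using j(3) l' by blast
            then show ?thesis using False by auto
          qed
        qed
        have memW': "\<And>l x. (l, x) \<in> W \<longleftrightarrow> (l, x) = (m0, c) \<or> (l \<in> {1..d} \<and> (x = p l \<or> x = q l) \<and> (l, x) \<noteq> (j, p j))"
          using memW zp \<open>mz = j\<close> by simp
        have "W = insert (m0, c) (pt d q)"
        proof (rule set_eqI)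
          fix y :: "nat \<times> nat"
          obtain l' x' where y: "y = (l', x')" by fastforce
          show "y \<in> W \<longleftrightarrow> y \<in> insert (m0, c) (pt d q)"
            unfolding y memW' insert_iff mem_pt using key[of l' x'] by blast
        qed
        then show ?thesis using generic[of i q] iT cpq unfolding q_def by simp
      qed
    next
      case False
      have pqz: "p mz = q mz" using j(3)[OF mz(1) False] .
      have zv: "zv = p mz" using mz pqz by auto
      show ?thesis
      proof (cases "m0 = mz")
        case True
        define p' where "p' = p(mz := c)"
        define q' where "q' = q(mz := c)"
        have WPQ: "W = pt d p' \<union> pt d q'"
        proof (rule set_eqI)
          fix y :: "nat \<times> nat"
          obtain l' x' where y: "y = (l', x')" by fastforce
          show "y \<in> W \<longleftrightarrow> y \<in> pt d p' \<union> pt d q'"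
          proof (cases "l' = mz")
            case True
            then show ?thesis unfolding y p'_def q'_def memW Un_iff mem_pt using \<open>m0 = mz\<close> zv pqz m0 by auto
          next
            case False
            then show ?thesis unfolding y p'_def q'_def memW Un_iff mem_pt using \<open>m0 = mz\<close> by auto
          qed
        qed
        have inW1: "(j, q j) \<in> W" "(j, p j) \<in> W" using memW j(1) False by auto
        obtain i1 where i1: "i1 \<in> {1..T}" "W - {(j, q j)} \<subseteq> EE i1" using gW[OF inW1(1)] by blast
        obtain i2 where i2: "i2 \<in> {1..T}" "W - {(j, p j)} \<subseteq> EE i2" using gW[OF inW1(2)] by blast
        have "pt d p' \<subseteq> W - {(j, q j)}" using WPQ pq False unfolding p'_def by (auto simp: mem_pt pt_def)
        then obtain s1 where s1: "s1 \<le> T" "\<forall>l\<in>{1..d}. f s1 l = p' l" using walkpt[OF i1(1)] i1(2) by blast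
        have "pt d q' \<subseteq> W - {(j, p j)}" using WPQ pq False unfolding q'_def by (auto simp: mem_pt pt_def)
        then obtain s2 where s2: "s2 \<le> T" "\<forall>l\<in>{1..d}. f s2 l = q' l" using walkpt[OF i2(1)] i2(2) by blast
        have "adj d p' q'" unfolding adj_def p'_def q'_def using j(1,3) j(2) False by (intro bexI[of _ j]) simp_all
        then show ?thesis using CLW[OF s1(1) s2(1) s1(2) s2(2) _ WPQ] by blast
      next
        case False
        note m0mz = False
        have inW: "(j, p j) \<in> W" "(j, q j) \<in> W" "(m0, c) \<in> W" "(m0, p m0) \<in> W"
          using memW j(1) m0 \<open>mz \<noteq> j\<close> m0mz by auto
        show ?thesis
        proof (cases "m0 = j")
          case True
          obtain i1 where i1: "i1 \<in> {1..T}" "W - {(j, p j)} \<subseteq> EE i1" using gW[OF inW(1)] by blast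
          obtain i2 where i2: "i2 \<in> {1..T}" "W - {(j, q j)} \<subseteq> EE i2" using gW[OF inW(2)] by blast
          have c1: "c \<noteq> q j" "c \<noteq> p j" using cpq True by simp_all
          have "(j, q j) \<in> EE i1" "(j, c) \<in> EE i1" using i1(2) inW(2,3) True pq c1 by auto
          then have u1: "q j = Suc c \<or> c = Suc (q j)" using adj_in_EE[OF i1(1)] c1 by metis
          have "(j, p j) \<in> EE i2" "(j, c) \<in> EE i2" using i2(2) inW(1,3) True pq c1 by auto
          then have u2: "p j = Suc c \<or> c = Suc (p j)" using adj_in_EE[OF i2(1)] c1 by metis
          show ?thesis using u1 u2 j(2) by linarith
        next
          case False
          note m0j = False
          have pm0: "p m0 = q m0" using j(3)[OF m0 m0j] .
          have cp: "c \<noteq> p m0" using cpq by simp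
          obtain i1 where i1: "i1 \<in> {1..T}" "W - {(j, p j)} \<subseteq> EE i1" using gW[OF inW(1)] by blast
          obtain i2 where i2: "i2 \<in> {1..T}" "W - {(j, q j)} \<subseteq> EE i2" using gW[OF inW(2)] by blast
          obtain i3 where i3: "i3 \<in> {1..T}" "W - {(m0, c)} \<subseteq> EE i3" using gW[OF inW(3)] by blast
          obtain i4 where i4: "i4 \<in> {1..T}" "W - {(m0, p m0)} \<subseteq> EE i4" using gW[OF inW(4)] by blast
          have h1: "hasE f (Suc T) m0 j (p m0) c (q j)"
          proof -
            have "(m0, p m0) \<in> EE i1" "(m0, c) \<in> EE i1" "(j, q j) \<in> EE i1"
              using i1(2) inW m0j pq by auto
            then show ?thesis using hasE_in_EE[OF i1(1)] cp m0j by (metis)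
          qed
          have h2: "hasE f (Suc T) m0 j (p m0) c (p j)"
          proof -
            have "(m0, p m0) \<in> EE i2" "(m0, c) \<in> EE i2" "(j, p j) \<in> EE i2"
              using i2(2) inW m0j pq by auto
            then show ?thesis using hasE_in_EE[OF i2(1)] cp m0j by (metis)
          qed
          have h3: "hasE f (Suc T) j m0 (p j) (q j) (p m0)"
          proof -
            have "(j, p j) \<in> EE i3" "(j, q j) \<in> EE i3" "(m0, p m0) \<in> EE i3"
              using i3(2) inW m0j cp by auto
            then show ?thesis using hasE_in_EE[OF i3(1)] pq m0j by (metis)
          qed
          have h4: "hasE f (Suc T) j m0 (p j) (q j) c"
          proof -
            have "(j, p j) \<in> EE i4" "(j, q j) \<in> EE i4" "(m0, c) \<in> EE i4"
              using i4(2) inW m0j cp by auto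
            then show ?thesis using hasE_in_EE[OF i4(1)] pq m0j by (metis)
          qed
          have "\<not> (hasE f (Suc T) j m0 (p j) (q j) (p m0) \<and> hasE f (Suc T) j m0 (p j) (q j) c \<and>
                   hasE f (Suc T) m0 j (p m0) c (p j) \<and> hasE f (Suc T) m0 j (p m0) c (q j))"
            using NS j(1) m0 m0j pq cp unfolding nosq_def by (metis eq_commute)
          then show ?thesis using h1 h2 h3 h4 by blast
        qed
      qed
    qed
  qed
qed

end


context cw begin

lemma C3c:
  assumes SV: "\<forall>y\<in>S. y \<noteq> v \<longrightarrow> fst y \<in> {1..d}"
  and cS: "card S = Suc (Suc d)" and xS: "x \<in> S"
  and good: "\<forall>y\<in>S. y \<noteq> x \<longrightarrow> S - {y} \<in> Bc"
  shows "\<exists>i\<in>{1..T}. S = Sx ee i"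
proof (cases "v \<in> S")
  case False
  then show ?thesis using caseA[OF SV False cS xS good] by blast
next
  case True
  show ?thesis
  proof (cases "x = v")
    case True
    then show ?thesis using caseB[OF SV \<open>v \<in> S\<close> cS] good by blast
  next
    case False
    have finS: "finite S" using cS by (metis card.infinite nat.distinct(1))
    have "S - {v} \<in> Bc" using good \<open>v \<in> S\<close> False by auto
    then obtain i where i: "i \<in> {1..T}" "S - {v} - {v} \<subseteq> EE i" using Bc_sub by blast
    have sub: "S - {v} \<subseteq> EE i" using i(2) by auto
    have "card (S - {v}) = Suc d" using cS \<open>v \<in> S\<close> finS by simp
    then have "S - {v} = EE i" using card_subset_eq[OF finite_EE sub] card_EE[OF i(1)] by simp
    then have "S = insert v (EE i)" using \<open>v \<in> S\<close> insert_Diff by metis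
    then show ?thesis using i(1) Sx_ee[of i] by (intro bexI[of _ i]) simp_all
  qed
qed

lemma card_ee: "card (ee i) = Suc d"
  unfolding ee_def using v_notin_pt card_pt finite_pt by simp

lemma card_Sx: "i \<in> {1..T} \<Longrightarrow> card (Sx ee i) = Suc (Suc d)"
  unfolding Sx_ee using v_notin_EE card_EE finite_EE by simp

lemma C2c:
  assumes i: "i \<in> {1..T}" and j: "j \<le> T" and sub: "ee j \<subseteq> Sx ee i"
  shows "j = i - 1 \<or> j = i"
proof -
  have "pt d (f j) \<subseteq> EE i" using sub v_notin_pt unfolding ee_def Sx_ee by blast
  then have "(\<forall>l\<in>{1..d}. f j l = f (i - 1) l) \<or> (\<forall>l\<in>{1..d}. f j l = f i l)"
    using pt_sub_EE[OF i] by blast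
  moreover have "i - 1 \<le> T" "i \<le> T" using i by auto
  ultimately show ?thesis using W1 j by blast
qed

lemma einjc:
  assumes "i \<le> T" "j \<le> T" "ee i = ee j" shows "i = j"
proof -
  have "pt d (f i) = pt d (f j)"
  proof -
    have "pt d (f i) = ee i - {v}" unfolding ee_def using v_notin_pt by auto
    also have "\<dots> = ee j - {v}" using assms(3) by simp
    also have "\<dots> = pt d (f j)" unfolding ee_def using v_notin_pt by auto
    finally show ?thesis .
  qed
  then show ?thesis using pt_eqD W1 assms(1,2) by blast
qed

end

lemma concrete_seq:
  assumes cwa: "cw d n f T" and n: "n = 4 * k - 3" and k: "k \<ge> 1"
  shows "sequential k (Suc d) (Astar k d \<union> {(Suc d, 1)}) (Bs (Suc d) (cw.ee d f) T - cw.ee d f ` {1..T}) (cw.ee d f) T"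
proof -
  interpret cw d n f T by (rule cwa)
  let ?V = "Astar k d \<union> {(Suc d, 1)}"
  have memA: "\<And>l x m. (l, x) \<in> Astar k m \<longleftrightarrow> l \<in> {1..m} \<and> 1 \<le> x \<and> x \<le> 4 * k - 3"
    unfolding Astar_def Aset_def vtx_def by auto
  have rng: "\<And>s l. s \<le> T \<Longrightarrow> l \<in> {1..d} \<Longrightarrow> 1 \<le> f s l \<and> f s l \<le> n"
    using gw unfolding goodwalk_def by auto
  have vv: "v = (Suc d, 1)" unfolding v_def by simp
  have eV: "\<And>i. i \<le> T \<Longrightarrow> ee i \<subseteq> ?V"
  proof
    fix i y assume i: "i \<le> T" and y: "y \<in> ee i"
    show "y \<in> ?V"
    proof (cases "y = v")
      case True
      then show ?thesis using vv by simp
    next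
      case False
      then have "y \<in> pt d (f i)" using y unfolding ee_def by simp
      then obtain l where l: "l \<in> {1..d}" "y = (l, f i l)" unfolding pt_def by blast
      then show ?thesis using memA rng[OF i l(1)] n by simp
    qed
  qed
  have SVc: "\<And>S y. S \<subseteq> ?V \<Longrightarrow> y \<in> S \<Longrightarrow> y \<noteq> v \<Longrightarrow> fst y \<in> {1..d}"
  proof -
    fix S y assume "S \<subseteq> ?V" "y \<in> S" "y \<noteq> v"
    then have "y \<in> Astar k d" using vv by auto
    then show "fst y \<in> {1..d}" using memA by (cases y) auto
  qed
  have AS: "absseq (Suc d) ?V ee T"
  proof
    show "1 \<le> Suc d" by simp
    show "\<And>i. i \<le> T \<Longrightarrow> ee i \<subseteq> ?V" by (rule eV)
    show "\<And>i. i \<le> T \<Longrightarrow> card (ee i) = Suc d" using card_ee by simp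
    show "\<And>i. i \<in> {1..T} \<Longrightarrow> card (Sx ee i) = Suc (Suc d)" by (rule card_Sx)
    show "\<And>i j. i \<in> {1..T} \<Longrightarrow> j \<le> T \<Longrightarrow> ee j \<subseteq> Sx ee i \<Longrightarrow> j = i - 1 \<or> j = i" by (rule C2c)
    show "\<And>i j. i \<le> T \<Longrightarrow> j \<le> T \<Longrightarrow> ee i = ee j \<Longrightarrow> i = j" by (rule einjc)
    show "\<And>S x. S \<subseteq> ?V \<Longrightarrow> card S = Suc (Suc d) \<Longrightarrow> x \<in> S \<Longrightarrow>
            \<forall>y\<in>S. y \<noteq> x \<longrightarrow> S - {y} \<in> Bs (Suc d) ee T \<Longrightarrow> \<exists>i\<in>{1..T}. S = Sx ee i"
    proof -
      fix S x assume a: "S \<subseteq> ?V" "card S = Suc (Suc d)" "x \<in> S" "\<forall>y\<in>S. y \<noteq> x \<longrightarrow> S - {y} \<in> Bs (Suc d) ee T"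
      have "\<forall>y\<in>S. y \<noteq> v \<longrightarrow> fst y \<in> {1..d}" using SVc[OF a(1)] by blast
      then show "\<exists>i\<in>{1..T}. S = Sx ee i" using C3c[OF _ a(2) a(3)] a(4) unfolding Bc_def by blast
    qed
  qed
  have main: "(\<forall>X\<in>(Bs (Suc d) ee T - ee ` {1..T}). X \<subseteq> ?V \<and> card X = Suc d) \<and>
     (\<forall>i \<le> T. ee i \<subseteq> ?V \<and> card (ee i) = Suc d) \<and> ee 0 \<in> (Bs (Suc d) ee T - ee ` {1..T}) \<and>
     (\<forall>i \<in> {1..T}. bproc (Suc d) ?V (Bs (Suc d) ee T - ee ` {1..T}) i - bproc (Suc d) ?V (Bs (Suc d) ee T - ee ` {1..T}) (i - 1) = {ee i}) \<and>
     bproc (Suc d) ?V (Bs (Suc d) ee T - ee ` {1..T}) (Suc T) = bproc (Suc d) ?V (Bs (Suc d) ee T - ee ` {1..T}) T \<and>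
     stationary (Suc d) ?V ((Bs (Suc d) ee T - ee ` {1..T}) - {ee 0}) \<and>
     (\<forall>i \<in> {1..T}. bproc (Suc d) ?V (((Bs (Suc d) ee T - ee ` {1..T}) \<union> {ee T}) - {ee 0}) i
                     - bproc (Suc d) ?V (((Bs (Suc d) ee T - ee ` {1..T}) \<union> {ee T}) - {ee 0}) (i - 1) = {ee (T - i)})"
    using absseq.abs_main[OF AS T1] by simp
  have r3: "Suc d \<ge> 3" using d2 by simp
  have VA: "?V \<subseteq> Astar k (Suc d)" using memA k by auto
  show ?thesis unfolding sequential_def r_graph_def by (rule conjI[OF r3], rule conjI[OF VA], rule main)
qed


definition bi :: "nat \<Rightarrow> nat \<Rightarrow> nat" where
  "bi L s = (if s mod Suc L < L then (if even (s div Suc L) then s mod Suc L else L - 1 - s mod Suc L)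
             else (if even (s div Suc L) then L - 1 else 0))"

definition lev :: "nat \<Rightarrow> nat \<Rightarrow> nat" where
  "lev L s = 2 * (s div Suc L) + (if s mod Suc L < L then 1 else 2)"

definition comb :: "nat \<Rightarrow> nat \<Rightarrow> (nat \<Rightarrow> nat \<Rightarrow> nat) \<Rightarrow> nat \<Rightarrow> nat \<Rightarrow> nat" where
  "comb D L f s = (f (bi L s))(Suc D := lev L s)"

lemma dm:
  assumes "r \<le> L"
  shows "(c * Suc L + r) div Suc L = c" "(c * Suc L + r) mod Suc L = r"
proof -
  have r: "r < Suc L" using assms by simp
  have e: "c * Suc L + r = r + c * Suc L" by simp
  have "(r + c * Suc L) div Suc L = c + r div Suc L" by (rule div_mult_self1) simp
  then show "(c * Suc L + r) div Suc L = c" unfolding e using r by simp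
  have "(r + c * Suc L) mod Suc L = r mod Suc L" by (rule mod_mult_self1)
  then show "(c * Suc L + r) mod Suc L = r" unfolding e using r by simp
qed

lemma sdecomp: "s = s div Suc L * Suc L + s mod Suc L" "s mod Suc L \<le> L"
proof -
  show "s = s div Suc L * Suc L + s mod Suc L" by (rule div_mult_mod_eq[symmetric])
  show "s mod Suc L \<le> L" using mod_less_divisor[of "Suc L" s] by simp
qed

lemma Suc_divmod:
  "s mod Suc L < L \<Longrightarrow> Suc s div Suc L = s div Suc L \<and> Suc s mod Suc L = Suc (s mod Suc L)"
  "s mod Suc L = L \<Longrightarrow> Suc s div Suc L = Suc (s div Suc L) \<and> Suc s mod Suc L = 0"
proof -
  assume a: "s mod Suc L < L"
  have "Suc s = s div Suc L * Suc L + Suc (s mod Suc L)" using sdecomp(1)[of s L] by simp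
  then show "Suc s div Suc L = s div Suc L \<and> Suc s mod Suc L = Suc (s mod Suc L)"
    using dm[of "Suc (s mod Suc L)" L "s div Suc L"] a by simp
next
  assume a: "s mod Suc L = L"
  have "Suc s = Suc (s div Suc L) * Suc L + 0" using sdecomp(1)[of s L] a by simp
  then show "Suc s div Suc L = Suc (s div Suc L) \<and> Suc s mod Suc L = 0"
    using dm[of 0 L "Suc (s div Suc L)"] by simp
qed

lemma adj_sym: "adj D P Q \<Longrightarrow> adj D Q P"
  unfolding adj_def by metis

lemma adj_lift:
  assumes "adj D P Q" shows "adj (Suc D) (P(Suc D := x)) (Q(Suc D := x))"
proof -
  obtain j where j: "j \<in> {1..D}" "P j = Suc (Q j) \<or> Q j = Suc (P j)"
    "\<forall>l\<in>{1..D}. l \<noteq> j \<longrightarrow> P l = Q l" using assms unfolding adj_def by blast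
  show ?thesis unfolding adj_def using j by (intro bexI[of _ j]) auto
qed

lemma adj_topI:
  assumes "\<forall>l\<in>{1..D}. P l = Q l" "x = Suc y \<or> y = Suc x"
  shows "adj (Suc D) (P(Suc D := x)) (Q(Suc D := y))"
  unfolding adj_def using assms by (intro bexI[of _ "Suc D"]) auto

lemma adj_restrict:
  assumes "adj (Suc D) P Q" "P (Suc D) = Q (Suc D)"
  shows "adj D P Q"
proof -
  obtain j where j: "j \<in> {1..Suc D}" "P j = Suc (Q j) \<or> Q j = Suc (P j)"
    "\<forall>l\<in>{1..Suc D}. l \<noteq> j \<longrightarrow> P l = Q l" using assms(1) unfolding adj_def by blast
  have "j \<noteq> Suc D" using j(2) assms(2) by auto
  then show ?thesis unfolding adj_def using j by (intro bexI[of _ j]) auto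
qed

lemma adj_top:
  assumes "adj (Suc D) P Q" "P (Suc D) \<noteq> Q (Suc D)"
  shows "(\<forall>l\<in>{1..D}. P l = Q l) \<and> (P (Suc D) = Suc (Q (Suc D)) \<or> Q (Suc D) = Suc (P (Suc D)))"
proof -
  obtain j where j: "j \<in> {1..Suc D}" "P j = Suc (Q j) \<or> Q j = Suc (P j)"
    "\<forall>l\<in>{1..Suc D}. l \<noteq> j \<longrightarrow> P l = Q l" using assms(1) unfolding adj_def by blast
  have "j = Suc D" using j(3) assms(2) by (metis atLeastAtMost_iff le_add1 plus_1_eq_Suc le_refl)
  then show ?thesis using j by auto
qed

lemma adj_dir:
  assumes "adj D P Q" "j \<in> {1..D}" "P j \<noteq> Q j"
  shows "\<forall>l\<in>{1..D}. l \<noteq> j \<longrightarrow> P l = Q l"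
proof -
  obtain j' where j': "j' \<in> {1..D}" "P j' = Suc (Q j') \<or> Q j' = Suc (P j')"
    "\<forall>l\<in>{1..D}. l \<noteq> j' \<longrightarrow> P l = Q l" using assms(1) unfolding adj_def by blast
  have "j' = j"
  proof (rule ccontr)
    assume "j' \<noteq> j"
    then have "P j = Q j" using j'(3) assms(2) by (metis)
    then show False using assms(3) by simp
  qed
  then show ?thesis using j' by blast
qed


lemma idx0: "s div Suc L = t div Suc L \<Longrightarrow> s mod Suc L = t mod Suc L \<Longrightarrow> s = t"
  by (metis div_mult_mod_eq)

lemma idx1: "s div Suc L = t div Suc L \<Longrightarrow> s mod Suc L = Suc (t mod Suc L) \<Longrightarrow> s = Suc t"
  by (metis add_Suc_right div_mult_mod_eq)

lemma idx2: "t div Suc L = Suc (s div Suc L) \<Longrightarrow> s mod Suc L = L \<Longrightarrow> t mod Suc L = 0 \<Longrightarrow> t = Suc s"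
proof -
  assume a: "t div Suc L = Suc (s div Suc L)" "s mod Suc L = L" "t mod Suc L = 0"
  have "t = t div Suc L * Suc L + t mod Suc L" by (rule sdecomp(1))
  also have "\<dots> = Suc (s div Suc L) * Suc L" using a by simp
  also have "\<dots> = Suc (s div Suc L * Suc L + L)" by simp
  also have "\<dots> = Suc s" using a(2) div_mult_mod_eq[of s "Suc L"] by simp
  finally show ?thesis .
qed

lemma odd_ne_even: "Suc (2 * a) \<noteq> 2 * (b::nat)" "2 * (b::nat) \<noteq> Suc (2 * a)"
  by presburger+

lemma lev_eqD:
  assumes "lev L s = lev L t"
  shows "s div Suc L = t div Suc L \<and> (s mod Suc L < L \<longleftrightarrow> t mod Suc L < L)"
  using assms unfolding lev_def by (auto split: if_splits simp: odd_ne_even)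

locale combl =
  fixes D L M n :: nat and f :: "nat \<Rightarrow> nat \<Rightarrow> nat"
  assumes D1: "D \<ge> 1" and L1: "L \<ge> 1" and M1: "M \<ge> 1" and gwf: "goodwalk D n f L"
    and Mn: "2 * M - 1 \<le> n"
begin

abbreviation "N \<equiv> M * Suc L - 1"
abbreviation "g \<equiv> comb D L f"

lemma fW1: "s < L \<Longrightarrow> t < L \<Longrightarrow> (\<forall>l\<in>{1..D}. f s l = f t l) \<Longrightarrow> s = t"
  using gwf unfolding goodwalk_def by blast
lemma fW2: "Suc s < L \<Longrightarrow> adj D (f s) (f (Suc s))"
  using gwf unfolding goodwalk_def by blast
lemma fW3: "s < L \<Longrightarrow> t < L \<Longrightarrow> adj D (f s) (f t) \<Longrightarrow> s = Suc t \<or> t = Suc s"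
  using gwf unfolding goodwalk_def by blast
lemma fNS: "nosq D f L"
  using gwf unfolding goodwalk_def by blast
lemma frng: "s < L \<Longrightarrow> l \<in> {1..D} \<Longrightarrow> 1 \<le> f s l \<and> f s l \<le> n"
  using gwf unfolding goodwalk_def by blast

lemma g_low: "l \<noteq> Suc D \<Longrightarrow> g s l = f (bi L s) l"
  unfolding comb_def by simp
lemma g_top: "g s (Suc D) = lev L s"
  unfolding comb_def by simp

lemma cbound:
  assumes s: "s < N"
  shows "s div Suc L < M" "s mod Suc L = L \<Longrightarrow> Suc (s div Suc L) < M"
proof -
  have e: "s = s div Suc L * Suc L + s mod Suc L" by (rule sdecomp(1))
  define X where "X = s div Suc L * Suc L"
  have e': "s = X + s mod Suc L" using e unfolding X_def .
  show "s div Suc L < M"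
  proof (rule ccontr)
    assume "\<not> s div Suc L < M"
    then have "M \<le> s div Suc L" by simp
    then have "M * Suc L \<le> X" unfolding X_def by (rule mult_le_mono1)
    then show False using s e' by linarith
  qed
  assume o: "s mod Suc L = L"
  show "Suc (s div Suc L) < M"
  proof (rule ccontr)
    assume "\<not> Suc (s div Suc L) < M"
    then have "M \<le> Suc (s div Suc L)" by simp
    then have "M * Suc L \<le> Suc (s div Suc L) * Suc L" by (rule mult_le_mono1)
    moreover have "Suc (s div Suc L) * Suc L = X + Suc L" unfolding X_def by simp
    ultimately show False using s e' o by linarith
  qed
qed

lemma bi_lt: "s < N \<Longrightarrow> bi L s < L"
  unfolding bi_def using L1 by auto

lemma lev_rng: "s < N \<Longrightarrow> 1 \<le> lev L s \<and> lev L s \<le> 2 * M - 1"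
proof -
  assume s: "s < N"
  show ?thesis
  proof (cases "s mod Suc L < L")
    case True
    then show ?thesis unfolding lev_def using cbound(1)[OF s] by auto
  next
    case False
    then have "s mod Suc L = L" using sdecomp(2)[of s L] by simp
    then show ?thesis unfolding lev_def using cbound(2)[OF s] by auto
  qed
qed

lemma step:
  assumes s: "Suc s < N"
  shows "(lev L (Suc s) = lev L s \<and> (bi L (Suc s) = Suc (bi L s) \<or> bi L s = Suc (bi L (Suc s))))
         \<or> (lev L (Suc s) = Suc (lev L s) \<and> bi L (Suc s) = bi L s)"
proof -
  define c where "c = s div Suc L"
  define r where "r = s mod Suc L"
  have rL: "r \<le> L" unfolding r_def using sdecomp(2) .
  show ?thesis
  proof (cases "r < L")
    case True
    have sd: "Suc s div Suc L = c" "Suc s mod Suc L = Suc r" using Suc_divmod(1)[of s L] True unfolding c_def r_def by auto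
    show ?thesis
    proof (cases "Suc r < L")
      case True
      have "lev L (Suc s) = lev L s" unfolding lev_def using sd \<open>r < L\<close> True unfolding c_def r_def by simp
      moreover have "bi L (Suc s) = Suc (bi L s) \<or> bi L s = Suc (bi L (Suc s))"
        unfolding bi_def using sd \<open>r < L\<close> True unfolding c_def r_def by auto
      ultimately show ?thesis by blast
    next
      case False
      then have rr: "Suc r = L" using \<open>r < L\<close> by simp
      have "lev L (Suc s) = Suc (lev L s)" unfolding lev_def using sd \<open>r < L\<close> rr unfolding c_def r_def by simp
      moreover have "bi L (Suc s) = bi L s"
        unfolding bi_def using sd \<open>r < L\<close> rr unfolding c_def r_def by auto
      ultimately show ?thesis by blast
    qed
  next
    case False
    then have rr: "r = L" using rL by simp
    have sd: "Suc s div Suc L = Suc c" "Suc s mod Suc L = 0" using Suc_divmod(2)[of s L] rr unfolding c_def r_def by auto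
    have "lev L (Suc s) = Suc (lev L s)" unfolding lev_def using sd rr L1 unfolding c_def r_def by simp
    moreover have "bi L (Suc s) = bi L s"
      unfolding bi_def using sd rr L1 unfolding c_def r_def by auto
    ultimately show ?thesis by blast
  qed
qed

lemma inc_unique:
  assumes s1: "Suc s1 < N" and s2: "Suc s2 < N"
    and i1: "lev L (Suc s1) = Suc (lev L s1)" and i2: "lev L (Suc s2) = Suc (lev L s2)"
    and e: "lev L s1 = lev L s2"
  shows "s1 = s2"
proof -
  have inc: "\<And>s. lev L (Suc s) = Suc (lev L s) \<Longrightarrow> s mod Suc L < L \<Longrightarrow> s mod Suc L = L - 1"
  proof -
    fix s assume a: "lev L (Suc s) = Suc (lev L s)" "s mod Suc L < L"
    have sd: "Suc s div Suc L = s div Suc L" "Suc s mod Suc L = Suc (s mod Suc L)" using Suc_divmod(1)[OF a(2)] by auto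
    show "s mod Suc L = L - 1"
    proof (rule ccontr)
      assume "s mod Suc L \<noteq> L - 1"
      then have "Suc (s mod Suc L) < L" using a(2) by simp
      then have "lev L (Suc s) = lev L s" unfolding lev_def using sd a(2) by simp
      then show False using a(1) by simp
    qed
  qed
  have d: "s1 div Suc L = s2 div Suc L" and t: "s1 mod Suc L < L \<longleftrightarrow> s2 mod Suc L < L" using lev_eqD[OF e] by auto
  have "s1 mod Suc L = s2 mod Suc L"
  proof (cases "s1 mod Suc L < L")
    case True
    then show ?thesis using inc[OF i1] inc[OF i2] t by simp
  next
    case False
    then show ?thesis using t sdecomp(2)[of s1 L] sdecomp(2)[of s2 L] by simp
  qed
  then show ?thesis using idx0 d by blast
qed

end


context combl begin

lemma gW2: assumes s: "Suc s < N" shows "adj (Suc D) (g s) (g (Suc s))"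
proof -
  have b1: "bi L s < L" "bi L (Suc s) < L" using bi_lt s by auto
  show ?thesis
  proof (cases "lev L (Suc s) = lev L s \<and> (bi L (Suc s) = Suc (bi L s) \<or> bi L s = Suc (bi L (Suc s)))")
    case True
    then have "adj D (f (bi L s)) (f (bi L (Suc s)))"
      using fW2[of "bi L s"] fW2[of "bi L (Suc s)"] adj_sym b1 by auto
    then have "adj (Suc D) ((f (bi L s))(Suc D := lev L s)) ((f (bi L (Suc s)))(Suc D := lev L s))"
      by (rule adj_lift)
    then show ?thesis unfolding comb_def using True by simp
  next
    case False
    then have F: "lev L (Suc s) = Suc (lev L s) \<and> bi L (Suc s) = bi L s" using step[OF s] by blast
    have "adj (Suc D) ((f (bi L s))(Suc D := lev L s)) ((f (bi L (Suc s)))(Suc D := lev L (Suc s)))"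
      by (rule adj_topI) (use F in auto)
    then show ?thesis unfolding comb_def .
  qed
qed

lemma gW1:
  assumes s: "s < N" and t: "t < N" and e: "\<forall>l\<in>{1..Suc D}. g s l = g t l"
  shows "s = t"
proof -
  have lv: "lev L s = lev L t" using e g_top by (metis atLeastAtMost_iff le_add1 plus_1_eq_Suc le_refl)
  have "\<forall>l\<in>{1..D}. f (bi L s) l = f (bi L t) l"
  proof
    fix l assume l: "l \<in> {1..D}"
    then have "g s l = g t l" using e by auto
    moreover have "l \<noteq> Suc D" using l by auto
    ultimately show "f (bi L s) l = f (bi L t) l" using g_low by metis
  qed
  then have bb: "bi L s = bi L t" using fW1 bi_lt s t by blast
  have d: "s div Suc L = t div Suc L" and ty: "s mod Suc L < L \<longleftrightarrow> t mod Suc L < L" using lev_eqD[OF lv] by auto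
  have "s mod Suc L = t mod Suc L"
  proof (cases "s mod Suc L < L")
    case True
    then have "t mod Suc L < L" using ty by simp
    then show ?thesis using bb True d unfolding bi_def by (auto split: if_splits)
  next
    case False
    then show ?thesis using ty sdecomp(2)[of s L] sdecomp(2)[of t L] by simp
  qed
  then show ?thesis using idx0 d by blast
qed

lemma gW3:
  assumes s: "s < N" and t: "t < N" and a: "adj (Suc D) (g s) (g t)"
  shows "s = Suc t \<or> t = Suc s"
proof (cases "lev L s = lev L t")
  case True
  have "adj D (g s) (g t)" using adj_restrict[OF a] True g_top by simp
  then have "adj D (f (bi L s)) (f (bi L t))" using adj_cong g_low by (metis Suc_n_not_le_n atLeastAtMost_iff)
  then have bb: "bi L s = Suc (bi L t) \<or> bi L t = Suc (bi L s)" using fW3 bi_lt s t by blast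
  have d: "s div Suc L = t div Suc L" and ty: "s mod Suc L < L \<longleftrightarrow> t mod Suc L < L" using lev_eqD[OF True] by auto
  show ?thesis
  proof (cases "s mod Suc L < L")
    case True
    then have tl: "t mod Suc L < L" using ty by simp
    have "s mod Suc L = Suc (t mod Suc L) \<or> t mod Suc L = Suc (s mod Suc L)"
      using bb True tl d unfolding bi_def by (auto split: if_splits)
    then show ?thesis using idx1 d by metis
  next
    case False
    then have "s mod Suc L = t mod Suc L" using ty sdecomp(2)[of s L] sdecomp(2)[of t L] by simp
    then have "s = t" using idx0 d by blast
    then show ?thesis using bb by simp
  qed
next
  case False
  have F: "(\<forall>l\<in>{1..D}. g s l = g t l) \<and> (g s (Suc D) = Suc (g t (Suc D)) \<or> g t (Suc D) = Suc (g s (Suc D)))"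
    using adj_top[OF a] False g_top by simp
  then have "\<forall>l\<in>{1..D}. f (bi L s) l = f (bi L t) l" using g_low by auto
  then have bb: "bi L s = bi L t" using fW1 bi_lt s t by blast
  have lv: "lev L s = Suc (lev L t) \<or> lev L t = Suc (lev L s)" using F g_top by simp
  have gen: "\<And>x y. x < N \<Longrightarrow> y < N \<Longrightarrow> bi L x = bi L y \<Longrightarrow> lev L y = Suc (lev L x) \<Longrightarrow> y = Suc x"
  proof -
    fix x y assume x: "x < N" and y: "y < N" and bxy: "bi L x = bi L y" and l: "lev L y = Suc (lev L x)"
    have rx: "x mod Suc L \<le> L" "y mod Suc L \<le> L" using sdecomp(2) by auto
    show "y = Suc x"
    proof (cases "x mod Suc L < L")
      case True
      have "\<not> y mod Suc L < L \<and> y div Suc L = x div Suc L"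
        using l True unfolding lev_def by (auto split: if_splits simp: odd_ne_even)
      then have yL: "y mod Suc L = L" "y div Suc L = x div Suc L" using rx by auto
      have "x mod Suc L = L - 1" using bxy True yL unfolding bi_def by (auto split: if_splits)
      then have "y mod Suc L = Suc (x mod Suc L)" using yL L1 by simp
      then show ?thesis using idx1 yL(2) by metis
    next
      case False
      then have xL: "x mod Suc L = L" using rx by simp
      have "y mod Suc L < L \<and> y div Suc L = Suc (x div Suc L)"
        using l xL unfolding lev_def by (auto split: if_splits simp: odd_ne_even)
      then have yl: "y mod Suc L < L" "y div Suc L = Suc (x div Suc L)" by auto
      have "y mod Suc L = 0" using bxy xL yl L1 unfolding bi_def by (auto split: if_splits)
      then show ?thesis by (rule idx2[OF yl(2) xL])
    qed
  qed
  show ?thesis using lv gen[OF s t bb] gen[OF t s bb[symmetric]] by blast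
qed

lemma H1:
  assumes j: "j \<in> {1..D}" and l: "l \<in> {1..D}" and jl: "j \<noteq> l" and aa: "a \<noteq> a'"
    and h: "hasE g N j l a a' b"
  shows "hasE f L j l a a' b"
proof -
  obtain s where s: "Suc s < N" "(g s j = a \<and> g (Suc s) j = a') \<or> (g s j = a' \<and> g (Suc s) j = a)" "g s l = b"
    using h unfolding hasE_def by blast
  have jD: "j \<noteq> Suc D" "l \<noteq> Suc D" using j l by auto
  have gj: "g s j = f (bi L s) j" "g (Suc s) j = f (bi L (Suc s)) j" "g s l = f (bi L s) l" using g_low jD by auto
  have ne: "f (bi L s) j \<noteq> f (bi L (Suc s)) j" using s(2) aa gj by auto
  have b1: "bi L s < L" "bi L (Suc s) < L" using bi_lt s(1) by auto
  have st: "bi L (Suc s) = Suc (bi L s) \<or> bi L s = Suc (bi L (Suc s))" using step[OF s(1)] ne by auto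
  then show ?thesis
  proof
    assume e: "bi L (Suc s) = Suc (bi L s)"
    show ?thesis unfolding hasE_def
      by (rule exI[of _ "bi L s"]) (use e b1 s gj in auto)
  next
    assume e: "bi L s = Suc (bi L (Suc s))"
    have ad: "adj D (f (bi L (Suc s))) (f (Suc (bi L (Suc s))))" using fW2 e b1 by simp
    have "f (bi L (Suc s)) j \<noteq> f (Suc (bi L (Suc s))) j" using ne e by simp
    then have "f (bi L (Suc s)) l = f (Suc (bi L (Suc s))) l" using adj_dir[OF ad j] l jl by auto
    then have fl: "f (bi L (Suc s)) l = b" using e s(3) gj by simp
    show ?thesis unfolding hasE_def
      by (rule exI[of _ "bi L (Suc s)"]) (use e b1 s gj fl in auto)
  qed
qed

lemma H2:
  assumes l: "l \<in> {1..D}" and aa: "a \<noteq> a'"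
    and h1: "hasE g N (Suc D) l a a' b" and h2: "hasE g N (Suc D) l a a' b'"
  shows "b = b'"
proof -
  obtain s1 where s1: "Suc s1 < N" "(g s1 (Suc D) = a \<and> g (Suc s1) (Suc D) = a') \<or> (g s1 (Suc D) = a' \<and> g (Suc s1) (Suc D) = a)" "g s1 l = b"
    using h1 unfolding hasE_def by blast
  obtain s2 where s2: "Suc s2 < N" "(g s2 (Suc D) = a \<and> g (Suc s2) (Suc D) = a') \<or> (g s2 (Suc D) = a' \<and> g (Suc s2) (Suc D) = a)" "g s2 l = b'"
    using h2 unfolding hasE_def by blast
  have i1: "lev L (Suc s1) = Suc (lev L s1)" using step[OF s1(1)] s1(2) aa g_top by auto
  have i2: "lev L (Suc s2) = Suc (lev L s2)" using step[OF s2(1)] s2(2) aa g_top by auto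
  have "lev L s1 = lev L s2" using i1 i2 s1(2) s2(2) g_top by auto
  then have "s1 = s2" using inc_unique[OF s1(1) s2(1) i1 i2] by simp
  then show ?thesis using s1(3) s2(3) by simp
qed

lemma gNS: "nosq (Suc D) g N"
  unfolding nosq_def
proof (intro ballI allI impI notI)
  fix j l a a' b b'
  assume j: "j \<in> {1..Suc D}" and l: "l \<in> {1..Suc D}" and jl: "j \<noteq> l" and aa: "a \<noteq> a'" and bb: "b \<noteq> b'"
    and h: "hasE g N j l a a' b \<and> hasE g N j l a a' b' \<and> hasE g N l j b b' a \<and> hasE g N l j b b' a'"
  show False
  proof (cases "j = Suc D")
    case True
    then have "l \<in> {1..D}" using l jl by auto
    then show False using H2[OF _ aa] h bb True by blast
  next
    case False
    note jD = False
    show False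
    proof (cases "l = Suc D")
      case True
      then have "j \<in> {1..D}" using j jD by auto
      then show False using H2[OF _ bb] h aa True by blast
    next
      case False
      have j': "j \<in> {1..D}" and l': "l \<in> {1..D}" using j l jD False by auto
      have "hasE f L j l a a' b" "hasE f L j l a a' b'" "hasE f L l j b b' a" "hasE f L l j b b' a'"
        using H1[OF j' l' jl aa] H1[OF l' j' jl[symmetric] bb] h by auto
      then show False using fNS j' l' jl aa bb unfolding nosq_def by blast
    qed
  qed
qed

lemma grng: "s < N \<Longrightarrow> l \<in> {1..Suc D} \<Longrightarrow> 1 \<le> g s l \<and> g s l \<le> n"
proof -
  assume s: "s < N" and l: "l \<in> {1..Suc D}"
  show ?thesis
  proof (cases "l = Suc D")
    case True
    then show ?thesis using lev_rng[OF s] Mn g_top by simp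
  next
    case False
    then have "l \<in> {1..D}" using l by auto
    then show ?thesis using frng bi_lt[OF s] g_low False by simp
  qed
qed

lemma comb_good: "goodwalk (Suc D) n g N"
  unfolding goodwalk_def
  using gW1 gW2 gW3 gNS grng by blast

end


fun wlen :: "nat \<Rightarrow> nat \<Rightarrow> nat" where
  "wlen M 0 = 2 * M - 1"
| "wlen M (Suc D) = M * Suc (wlen M D) - 1"

fun walk :: "nat \<Rightarrow> nat \<Rightarrow> nat \<Rightarrow> nat \<Rightarrow> nat" where
  "walk M 0 = (\<lambda>s l. Suc s)"
| "walk M (Suc D) = comb (Suc D) (wlen M D) (walk M D)"

lemma wlen_eq: "M \<ge> 1 \<Longrightarrow> Suc (wlen M D) = 2 * M ^ Suc D"
proof (induction D)
  case 0
  then show ?case by simp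
next
  case (Suc D)
  have "M * Suc (wlen M D) \<ge> 1" using Suc.prems by simp
  then have "Suc (wlen M (Suc D)) = M * Suc (wlen M D)" by simp
  also have "\<dots> = 2 * M ^ Suc (Suc D)" using Suc by simp
  finally show ?case .
qed

lemma base_good:
  assumes "M \<ge> 1" "2 * M - 1 \<le> n"
  shows "goodwalk 1 n (\<lambda>s l. Suc s) (2 * M - 1)"
proof -
  have a: "\<forall>s<2 * M - 1. \<forall>t<2 * M - 1. (\<forall>l\<in>{1..1::nat}. Suc s = Suc t) \<longrightarrow> s = t" by auto
  have b: "\<forall>s. Suc s < 2 * M - 1 \<longrightarrow> adj 1 (\<lambda>l. Suc s) (\<lambda>l. Suc (Suc s))"
    unfolding adj_def by auto
  have c: "\<forall>s<2 * M - 1. \<forall>t<2 * M - 1. adj 1 (\<lambda>l. Suc s) (\<lambda>l. Suc t) \<longrightarrow> s = Suc t \<or> t = Suc s"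
    unfolding adj_def by auto
  have d: "nosq 1 (\<lambda>s l. Suc s) (2 * M - 1)" unfolding nosq_def by auto
  have e: "\<forall>s<2 * M - 1. \<forall>l\<in>{1..1::nat}. 1 \<le> Suc s \<and> Suc s \<le> n" using assms by auto
  show ?thesis unfolding goodwalk_def using a b c d e by blast
qed

lemma walk_good:
  assumes M: "M \<ge> 1" and n: "2 * M - 1 \<le> n"
  shows "goodwalk (Suc D) n (walk M D) (wlen M D)"
proof (induction D)
  case 0
  then show ?case using base_good[OF M n] by simp
next
  case (Suc D)
  have L1: "wlen M D \<ge> 1"
  proof -
    have "Suc (wlen M D) = 2 * M ^ Suc D" using wlen_eq[OF M] .
    moreover have "M ^ Suc D \<ge> 1" using M by simp
    ultimately show ?thesis by linarith
  qed
  interpret combl "Suc D" "wlen M D" M n "walk M D"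
    by (unfold_locales) (use L1 M Suc n in auto)
  show ?case using comb_good by simp
qed

lemma goodwalk_mono:
  assumes g: "goodwalk d n f N" and le: "N' \<le> N"
  shows "goodwalk d n f N'"
proof -
  have h: "\<And>j l a a' b. hasE f N' j l a a' b \<Longrightarrow> hasE f N j l a a' b"
  proof -
    fix j l a a' b assume "hasE f N' j l a a' b"
    then obtain s where s: "Suc s < N'" "(f s j = a \<and> f (Suc s) j = a') \<or> (f s j = a' \<and> f (Suc s) j = a)" "f s l = b"
      unfolding hasE_def by blast
    have "Suc s < N" using s(1) le by simp
    then show "hasE f N j l a a' b" unfolding hasE_def using s by blast
  qed
  have "nosq d f N" using g unfolding goodwalk_def by blast
  then have "nosq d f N'" unfolding nosq_def using h by meson
  then show ?thesis using g le unfolding goodwalk_def by auto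
qed


theorem proposition2p3:
  fixes r k :: nat
  assumes "r \<ge> 3" and "k \<ge> 2"
  shows "\<exists>(e :: nat \<Rightarrow> (nat \<times> nat) set) H.
           (\<forall>i \<le> (2*k - 1)^(r - 3) * (8*k^2 - 12*k + 6) - 2. vtx r 1 \<in> e i) \<and>
           sequential k r (Astar k (r - 1) \<union> {vtx r 1}) H e
             ((2*k - 1)^(r - 3) * (8*k^2 - 12*k + 6) - 2)"
proof -
  define M where "M = 2 * k - 1"
  define n where "n = 4 * k - 3"
  define d where "d = r - 1"
  define f where "f = walk M (r - 2)"
  define X where "X = 8 * k^2 - 12 * k + 6"
  define T where "T = (2*k - 1)^(r - 3) * (8*k^2 - 12*k + 6) - 2"
  obtain K where K: "k = K + 2" using assms(2) by (metis add.commute le_Suc_ex)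
  have Me: "M = 2 * K + 3" unfolding M_def K by simp
  have ne: "n = 2 * M - 1" unfolding n_def M_def K by simp
  have M1: "M \<ge> 1" using Me by simp
  have Xe: "X = 8 * K * K + 20 * K + 14"
  proof -
    have "8 * k^2 = 8 * K * K + 32 * K + 32" unfolding K by (simp add: power2_eq_square algebra_simps)
    moreover have "12 * k = 12 * K + 24" unfolding K by simp
    ultimately show ?thesis unfolding X_def by simp
  qed
  have XM: "X \<le> 2 * M * M" unfolding Xe Me by (simp add: algebra_simps)
  have P1: "M ^ (r - 3) \<ge> 1" using M1 by simp
  have TX: "T = M ^ (r - 3) * X - 2" unfolding T_def M_def X_def by simp
  have X14: "X \<ge> 14" unfolding Xe by simp
  have "M ^ (r - 3) * X \<ge> 1 * 14" using P1 X14 by (rule mult_le_mono)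
  then have TT: "Suc (Suc T) = M ^ (r - 3) * X" and T1: "T \<ge> 1" unfolding TX by auto
  have r1: "r - 1 = Suc (Suc (r - 3))" "Suc (r - 2) = r - 1" using assms(1) by auto
  define P where "P = M ^ (r - 3)"
  have h0: "Suc (wlen M (r - 2)) = 2 * M ^ (r - 1)" using wlen_eq[OF M1, of "r - 2"] r1(2) by simp
  have h1: "M ^ (r - 1) = P * M * M" unfolding r1(1) P_def by simp
  have h2: "P * X \<le> P * (2 * M * M)" using XM by (rule mult_le_mono2)
  have h3: "P * (2 * M * M) = 2 * (P * M * M)" by simp
  have h4: "Suc (Suc T) = P * X" using TT unfolding P_def .
  have TL: "Suc T \<le> wlen M (r - 2)" using h0 h1 h2 h3 h4 by linarith
  have gw0: "goodwalk (Suc (r - 2)) n f (wlen M (r - 2))" unfolding f_def using walk_good[OF M1] ne by simp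
  have gw: "goodwalk d n f (Suc T)" using goodwalk_mono[OF gw0 TL] r1(2) unfolding d_def by simp
  have cwi: "cw d n f T" using gw T1 assms(1) unfolding d_def by unfold_locales auto
  interpret cw d n f T by (rule cwi)
  have seq: "sequential k (Suc d) (Astar k d \<union> {(Suc d, 1)}) (Bs (Suc d) ee T - ee ` {1..T}) ee T"
    using concrete_seq[OF cwi, of k] n_def assms(2) by simp
  have rd: "Suc d = r" unfolding d_def using assms(1) by simp
  have vr: "vtx r 1 = (Suc d, 1)" unfolding vtx_def rd by simp
  have ev: "\<forall>i \<le> T. vtx r 1 \<in> ee i" unfolding ee_def v_def vr by simp
  have B: "sequential k r (Astar k (r - 1) \<union> {vtx r 1}) (Bs (Suc d) ee T - ee ` {1..T}) ee T"
    using seq unfolding vr rd[symmetric] d_def[symmetric] by (simp add: vtx_def)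
  have eqT: "(2*k - 1)^(r - 3) * (8*k^2 - 12*k + 6) - 2 = T" by (simp add: T_def)
  show ?thesis unfolding eqT using ev B by blast
qed


end
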